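(* Let $M$ be an $n$-dimensional manifold and let $g(t)$, $t\in[0,T)$, be a solution of the Ricci flow $\partial_t g_{ij}=-2R_{ij}$ on $M$. Let $\xi=\xi_{i_1\dots i_p}(x,t)$ be a smooth family of $p$-forms (anti-symmetric covariant $p$-tensors) satisfying the heat equation $$\frac{\partial \xi_{i_1\dots i_p}}{\partial t}=\Delta_d\,\xi_{i_1\dots i_p},$$ where $\Delta_d$ is the Hodge–de Rham Laplacian of $g(t)$ in the form $$\Delta_d\,\xi_{i_1\dots i_p}=g^{jk}\xi_{i_1\dots i_p;j;k}-\sum_{s=1}^{p}\xi_{i_1\dots i_{s-1}a\,i_{s+1}\dots i_p}R^{a}_{\ i_s}-\sum_{1\le s<t\le p}\xi_{i_1\dots i_{s-1}a\,i_{s+1}\dots i_{t-1}b\,i_{t+1}\dots i_p}R^{ab}_{\ \ i_si_t}.$$ Then $$\frac{\partial}{\partial t}|\xi|^2=\Delta|\xi|^2-2\,\xi^{i_1\dots i_p;j}\xi_{i_1\dots i_p;j}-p(p-1)\,\xi_{ij i_1\dots i_{p-2}}R^{ij}_{\ \ kl}\,\xi^{kl i_1\dots i_{p-2}},$$ where $|\xi|^2=g^{i_1k_1}\cdots g^{i_pk_p}\xi_{i_1\dots i_p}\xi_{k_1\dots k_p}$ and $\Delta f=g^{ij}f_{;i;j}$ is the Laplacian of $g(t)$ on functions.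
   Context: All quantities are computed with respect to $g(t)$; indices are raised and lowered with $g(t)$, and "$;j$" denotes covariant differentiation. Curvature conventions: $R^{l}_{\ ijk}=\partial_i\Gamma^l_{jk}-\partial_j\Gamma^l_{ik}+\Gamma^l_{im}\Gamma^m_{jk}-\Gamma^l_{jm}\Gamma^m_{ik}$, $R_{ijkl}=g_{hl}R^{h}_{\ ijk}$, $R_{jk}=R^{i}_{\ ijk}$ (Ricci tensor), $R^{a}_{\ i}=g^{ab}R_{bi}$, and $R^{ij}_{\ \ kl}=g^{ia}g^{jb}R_{abkl}$. *)

theory Defs
  imports "HOL-Analysis.Analysis"
begin

fun iter_pd :: "'a::real_normed_vector list \<Rightarrow> ('a \<Rightarrow> real) \<Rightarrow> 'a \<Rightarrow> real" where
  "iter_pd [] f = f"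
| "iter_pd (v # vs) f = (\<lambda>x. deriv (\<lambda>h. iter_pd vs f (x + h *\<^sub>R v)) 0)"

text \<open>C-infinity on W: all iterated partial derivatives (along coordinate directions)
  exist and are continuous on W (W is meant to be open).\<close>
definition Cinf_on :: "'a::euclidean_space set \<Rightarrow> ('a \<Rightarrow> real) \<Rightarrow> bool" where
  "Cinf_on W f \<longleftrightarrow>
     (\<forall>vs. set vs \<subseteq> Basis \<longrightarrow>
        continuous_on W (iter_pd vs f) \<and>
        (\<forall>x\<in>W. \<forall>v\<in>Basis. (\<lambda>h. iter_pd vs f (x + h *\<^sub>R v)) differentiable (at 0)))"

text \<open>A metric on a chart: G x is the matrix (g_ij(x)). Covariant tensors are functions
  T :: real^'n => 'n list => real, the list being the index tuple (i_1,...,i_q).\<close>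

definition pd :: "'n::finite \<Rightarrow> (real^'n \<Rightarrow> real) \<Rightarrow> real^'n \<Rightarrow> real" where
  "pd i f x = deriv (\<lambda>h. f (x + h *\<^sub>R axis i 1)) 0"

definition ginv :: "(real^'n \<Rightarrow> real^'n^'n) \<Rightarrow> real^'n \<Rightarrow> 'n::finite \<Rightarrow> 'n \<Rightarrow> real" where
  "ginv G x i j = matrix_inv (G x) $ i $ j"

definition Chr :: "(real^'n \<Rightarrow> real^'n^'n) \<Rightarrow> real^'n \<Rightarrow> 'n::finite \<Rightarrow> 'n \<Rightarrow> 'n \<Rightarrow> real" where
  "Chr G x l j k = (1/2) * (\<Sum>m\<in>UNIV. ginv G x l m *
      (pd j (\<lambda>y. G y $ m $ k) x + pd k (\<lambda>y. G y $ m $ j) x - pd m (\<lambda>y. G y $ j $ k) x))"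

text \<open>Covariant derivative: (cov G T) x (I @ [j]) = T_{I;j}.\<close>
definition cov :: "(real^'n \<Rightarrow> real^'n^'n) \<Rightarrow> (real^'n \<Rightarrow> 'n list \<Rightarrow> real)
                   \<Rightarrow> real^'n \<Rightarrow> 'n::finite list \<Rightarrow> real" where
  "cov G T x L = (let I = butlast L; j = last L in
     pd j (\<lambda>y. T y I) x
     - (\<Sum>s<length I. \<Sum>a\<in>UNIV. Chr G x a j (I ! s) * T x (I[s := a])))"

definition Riem_up :: "(real^'n \<Rightarrow> real^'n^'n) \<Rightarrow> real^'n \<Rightarrow> 'n::finite \<Rightarrow> 'n \<Rightarrow> 'n \<Rightarrow> 'n \<Rightarrow> real" where
  "Riem_up G x l i j k =
     pd i (\<lambda>y. Chr G y l j k) x - pd j (\<lambda>y. Chr G y l i k) x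
     + (\<Sum>m\<in>UNIV. Chr G x l i m * Chr G x m j k - Chr G x l j m * Chr G x m i k)"

definition Riem_low :: "(real^'n \<Rightarrow> real^'n^'n) \<Rightarrow> real^'n \<Rightarrow> 'n::finite \<Rightarrow> 'n \<Rightarrow> 'n \<Rightarrow> 'n \<Rightarrow> real" where
  "Riem_low G x i j k l = (\<Sum>h\<in>UNIV. G x $ h $ l * Riem_up G x h i j k)"

definition Ric :: "(real^'n \<Rightarrow> real^'n^'n) \<Rightarrow> real^'n \<Rightarrow> 'n::finite \<Rightarrow> 'n \<Rightarrow> real" where
  "Ric G x j k = (\<Sum>i\<in>UNIV. Riem_up G x i i j k)"

definition Ric_mixed :: "(real^'n \<Rightarrow> real^'n^'n) \<Rightarrow> real^'n \<Rightarrow> 'n::finite \<Rightarrow> 'n \<Rightarrow> real" where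
  "Ric_mixed G x a i = (\<Sum>b\<in>UNIV. ginv G x a b * Ric G x b i)"

definition Riem_uudd :: "(real^'n \<Rightarrow> real^'n^'n) \<Rightarrow> real^'n \<Rightarrow> 'n::finite \<Rightarrow> 'n \<Rightarrow> 'n \<Rightarrow> 'n \<Rightarrow> real" where
  "Riem_uudd G x a b k l = (\<Sum>c\<in>UNIV. \<Sum>d\<in>UNIV. ginv G x a c * ginv G x b d * Riem_low G x c d k l)"

definition tuples :: "nat \<Rightarrow> 'n::finite list set" where
  "tuples q = {L. length L = q}"

definition tinner :: "(real^'n \<Rightarrow> real^'n^'n) \<Rightarrow> real^'n \<Rightarrow> nat
                      \<Rightarrow> ('n::finite list \<Rightarrow> real) \<Rightarrow> ('n list \<Rightarrow> real) \<Rightarrow> real" where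
  "tinner G x q A B = (\<Sum>I\<in>tuples q. \<Sum>K\<in>tuples q.
       (\<Prod>s<q. ginv G x (I ! s) (K ! s)) * A I * B K)"

definition normsq :: "(real^'n \<Rightarrow> real^'n^'n) \<Rightarrow> (real^'n \<Rightarrow> 'n::finite list \<Rightarrow> real) \<Rightarrow> nat \<Rightarrow> real^'n \<Rightarrow> real" where
  "normsq G \<xi> p x = tinner G x p (\<xi> x) (\<xi> x)"

definition lap :: "(real^'n \<Rightarrow> real^'n^'n) \<Rightarrow> (real^'n \<Rightarrow> real) \<Rightarrow> real^'n \<Rightarrow> real" where
  "lap G f x = (\<Sum>i\<in>UNIV. \<Sum>j\<in>(UNIV::'n::finite set).
      ginv G x i j * cov G (cov G (\<lambda>y _. f y)) x [i, j])"

definition hodge_lap :: "(real^'n \<Rightarrow> real^'n^'n) \<Rightarrow> (real^'n \<Rightarrow> 'n::finite list \<Rightarrow> real) \<Rightarrow> nat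
                         \<Rightarrow> real^'n \<Rightarrow> 'n list \<Rightarrow> real" where
  "hodge_lap G \<xi> p x I =
     (\<Sum>j\<in>UNIV. \<Sum>k\<in>UNIV. ginv G x j k * cov G (cov G \<xi>) x (I @ [j, k]))
     - (\<Sum>s<p. \<Sum>a\<in>UNIV. \<xi> x (I[s := a]) * Ric_mixed G x a (I ! s))
     - (\<Sum>s<p. \<Sum>r\<in>{s<..<p}. \<Sum>a\<in>UNIV. \<Sum>b\<in>UNIV.
          \<xi> x (I[s := a, r := b]) * Riem_uudd G x a b (I ! s) (I ! r))"

definition curv_term :: "(real^'n \<Rightarrow> real^'n^'n) \<Rightarrow> (real^'n \<Rightarrow> 'n::finite list \<Rightarrow> real) \<Rightarrow> nat \<Rightarrow> real^'n \<Rightarrow> real" where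
  "curv_term G \<xi> p x =
     (\<Sum>i\<in>UNIV. \<Sum>j\<in>UNIV. \<Sum>k\<in>UNIV. \<Sum>l\<in>UNIV. \<Sum>k2\<in>UNIV. \<Sum>l2\<in>UNIV.
      \<Sum>J\<in>tuples (p - 2). \<Sum>K\<in>tuples (p - 2).
        \<xi> x ([i, j] @ J) * Riem_uudd G x i j k l
        * ginv G x k k2 * ginv G x l l2 * (\<Prod>s<p - 2. ginv G x (J ! s) (K ! s))
        * \<xi> x ([k2, l2] @ K))"

end

theory Submission
  imports Defs
begin



lemma finite_tuples[simp]: "finite (tuples q :: 'n::finite list set)"
  using finite_lists_length_eq[OF finite_class.finite_UNIV, of q] unfolding tuples_def by simp

lemma swap_sum:
  fixes h :: "'n::finite list \<Rightarrow> 'n list \<Rightarrow> real"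
  assumes "u < q"
  shows "(\<Sum>I\<in>tuples q. \<Sum>a\<in>UNIV. h I (I[u:=a])) = (\<Sum>J\<in>tuples q. \<Sum>b\<in>UNIV. h (J[u:=b]) J)"
proof -
  have "(\<Sum>I\<in>tuples q. \<Sum>a\<in>UNIV. h I (I[u:=a])) = (\<Sum>(I,a)\<in>tuples q \<times> UNIV. h I (I[u:=a]))"
    by (simp add: sum.cartesian_product)
  also have "\<dots> = (\<Sum>(J,b)\<in>tuples q \<times> UNIV. h (J[u:=b]) J)"
    apply (rule sum.reindex_bij_witness[where i="\<lambda>(I,a). (I[u:=a], I!u)" and j="\<lambda>(I,a). (I[u:=a], I!u)"])
    using assms by (auto simp: tuples_def)
  also have "\<dots> = (\<Sum>J\<in>tuples q. \<Sum>b\<in>UNIV. h (J[u:=b]) J)"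
    by (simp add: sum.cartesian_product)
  finally show ?thesis .
qed



lemma differentiable_prod':
  fixes f :: "'i \<Rightarrow> real \<Rightarrow> real"
  assumes "\<And>i. i \<in> I \<Longrightarrow> f i differentiable (at x within S)"
  shows "(\<lambda>x. \<Prod>i\<in>I. f i x) differentiable (at x within S)"
proof -
  have "\<forall>i\<in>I. \<exists>D. (f i has_derivative D) (at x within S)"
    using assms unfolding differentiable_def by blast
  then obtain D where "\<forall>i\<in>I. (f i has_derivative D i) (at x within S)"
    by metis
  then show ?thesis unfolding differentiable_def
    by (blast intro: has_derivative_prod)
qed

lemma det_differentiable:
  fixes H :: "real \<Rightarrow> real^'n::finite^'n"
  assumes "\<And>i j. (\<lambda>s. H s $ i $ j) differentiable (at t within S)"
  shows "(\<lambda>s. det (H s)) differentiable (at t within S)"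
  unfolding det_def
  apply (rule differentiable_sum)
   apply (simp add: finite_permutations)
  apply (intro ballI differentiable_mult differentiable_const differentiable_prod' assms)
  done

lemma mm3: "((A::real^'n::finite^'n) ** B ** C) $ i $ j = (\<Sum>a\<in>UNIV. \<Sum>b\<in>UNIV. A $ i $ a * B $ a $ b * C $ b $ j)"
  by (simp add: matrix_matrix_mult_def sum_distrib_right) (rule sum.swap)


lemma matrix_inv_props:
  fixes A :: "real^'n::finite^'n"
  assumes "det A \<noteq> 0"
  shows "A ** matrix_inv A = mat 1" "matrix_inv A ** A = mat 1"
proof -
  have "invertible A" using assms invertible_det_nz by blast
  then have "\<exists>A'. A ** A' = mat 1 \<and> A' ** A = mat 1" unfolding invertible_def by blast
  then have "A ** matrix_inv A = mat 1 \<and> matrix_inv A ** A = mat 1"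
    unfolding matrix_inv_def by (rule someI_ex)
  then show "A ** matrix_inv A = mat 1" "matrix_inv A ** A = mat 1" by auto
qed

lemma inv_cramer:
  fixes A :: "real^'n::finite^'n"
  assumes "det A \<noteq> 0"
  shows "matrix_inv A $ k $ j = det (\<chi> i l. if l = k then (if i = j then 1 else 0) else A$i$l) / det A"
proof -
  let ?x = "(\<chi> r. matrix_inv A $ r $ j)"
  have "A *v ?x = (\<chi> i. if i = j then 1 else 0)"
  proof -
    have "A *v ?x = (\<chi> i. (A ** matrix_inv A) $ i $ j)"
      by (simp add: matrix_vector_mult_def matrix_matrix_mult_def)
    also have "\<dots> = (\<chi> i. if i = j then 1 else 0)"
      using matrix_inv_props(1)[OF assms] by (simp add: mat_def)
    finally show ?thesis .
  qed
  then have "?x = (\<chi> k. det(\<chi> i l. if l=k then (\<chi> i. if i = j then (1::real) else 0)$i else A$i$l) / det A)"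
    using cramer[OF assms] by blast
  then have "?x $ k = det(\<chi> i l. if l=k then (\<chi> i. if i = j then (1::real) else 0)$i else A$i$l) / det A"
    by simp
  then show ?thesis by (simp only: vec_lambda_beta)
qed

lemma inv_deriv:
  fixes G :: "real \<Rightarrow> real^'n::finite^'n"
  assumes dG: "\<And>i j. ((\<lambda>s. G s $ i $ j) has_real_derivative G' i j) (at t within S)"
    and nz: "det (G t) \<noteq> 0" and tS: "t \<in> S"
  shows "((\<lambda>s. matrix_inv (G s) $ i $ j) has_real_derivative
           - (\<Sum>a\<in>UNIV. \<Sum>b\<in>UNIV. matrix_inv (G t) $ i $ a * G' a b * matrix_inv (G t) $ b $ j))
         (at t within S)"
proof -
  define C where "C = (\<lambda>s k j. det (\<chi> i l. if l = k then (if i = j then 1 else 0) else G s $i$l) / det (G s))"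
  have diffG: "\<And>i j. (\<lambda>s. G s $ i $ j) differentiable (at t within S)"
    using dG unfolding real_differentiable_def by blast
  have ddet: "(\<lambda>s. det (G s)) differentiable (at t within S)"
    by (rule det_differentiable[OF diffG])
  have dC: "(\<lambda>s. C s k j) differentiable (at t within S)" for k j
  proof -
    have "(\<lambda>s. (\<chi> i l. if l = k then (if i = j then 1 else 0) else G s $i$l) $ a $ b) differentiable (at t within S)" for a b
      by (cases "b = k") (auto intro: diffG)
    then show ?thesis unfolding C_def
      by (intro differentiable_divide ddet nz det_differentiable)
  qed
  have "continuous (at t within S) (\<lambda>s. det (G s))"
    using ddet differentiable_imp_continuous_within by blast
  then have ev: "\<forall>\<^sub>F s in at t within S. det (G s) \<noteq> 0"
    using nz unfolding continuous_within by (rule tendsto_imp_eventually_ne)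
  have CM: "det (G s) \<noteq> 0 \<Longrightarrow> matrix_inv (G s) $ k $ j = C s k j" for s k j
    unfolding C_def by (rule inv_cramer)
  define M where "M = matrix_inv (G t)"
  have ident: "matrix_inv (G s) $ i $ j =
      M $ i $ j - (\<Sum>a\<in>UNIV. \<Sum>b\<in>UNIV. matrix_inv (G s) $ i $ a * (G s $ a $ b - G t $ a $ b) * M $ b $ j)"
    if "det (G s) \<noteq> 0" for s
  proof -
    have 1: "matrix_inv (G s) ** G s ** M = M" using matrix_inv_props[OF that] by simp
    have 2: "matrix_inv (G s) ** G t ** M = matrix_inv (G s)"
      using matrix_inv_props[OF nz] unfolding M_def by (simp flip: matrix_mul_assoc)
    have "(\<Sum>a\<in>UNIV. \<Sum>b\<in>UNIV. matrix_inv (G s) $ i $ a * (G s $ a $ b - G t $ a $ b) * M $ b $ j)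
       = (\<Sum>a\<in>UNIV. \<Sum>b\<in>UNIV. matrix_inv (G s) $ i $ a * G s $ a $ b * M $ b $ j)
        - (\<Sum>a\<in>UNIV. \<Sum>b\<in>UNIV. matrix_inv (G s) $ i $ a * G t $ a $ b * M $ b $ j)"
      by (simp add: algebra_simps sum_subtractf)
    also have "\<dots> = M $ i $ j - matrix_inv (G s) $ i $ j"
      unfolding mm3[symmetric] 1 2 ..
    finally show ?thesis by simp
  qed
  define F where "F = (\<lambda>s. M $ i $ j - (\<Sum>a\<in>UNIV. \<Sum>b\<in>UNIV. C s i a * (G s $ a $ b - G t $ a $ b) * M $ b $ j))"
  have evF: "\<forall>\<^sub>F s in at t within S. F s = matrix_inv (G s) $ i $ j"
  proof -
    have "F s = matrix_inv (G s) $ i $ j" if "det (G s) \<noteq> 0" for s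
      unfolding F_def by (subst ident[OF that]) (simp add: CM[OF that])
    then show ?thesis using ev by (simp add: eventually_mono)
  qed
  have Ft: "F t = matrix_inv (G t) $ i $ j"
    by (simp add: F_def M_def)
  obtain DC where DC: "\<And>a. ((\<lambda>s. C s i a) has_real_derivative DC a) (at t within S)"
  proof -
    have "\<forall>a. \<exists>D. ((\<lambda>s. C s i a) has_real_derivative D) (at t within S)"
      using dC unfolding real_differentiable_def by blast
    then show ?thesis using that by metis
  qed
  have CMt: "C t i a = M $ i $ a" for a
    using CM[OF nz] unfolding M_def by simp
  have d1: "((\<lambda>s. C s i a * (G s $ a $ b - G t $ a $ b) * M $ b $ j) has_real_derivative
              (M $ i $ a * G' a b * M $ b $ j)) (at t within S)" for a b
  proof -
    have "((\<lambda>s. C s i a * (G s $ a $ b - G t $ a $ b)) has_real_derivative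
              (C t i a * (G' a b - 0) + DC a * (G t $ a $ b - G t $ a $ b))) (at t within S)"
      by (rule DERIV_mult'[OF DC DERIV_diff[OF dG DERIV_const]])
    then have "((\<lambda>s. C s i a * (G s $ a $ b - G t $ a $ b)) has_real_derivative
              (M $ i $ a * G' a b)) (at t within S)"
      by (simp add: CMt)
    then show ?thesis by (rule DERIV_cmult_right)
  qed
  have "(F has_real_derivative
      0 - (\<Sum>a\<in>UNIV. \<Sum>b\<in>UNIV. M $ i $ a * G' a b * M $ b $ j)) (at t within S)"
    unfolding F_def
    by (intro DERIV_diff DERIV_const DERIV_sum d1)
  then have "(F has_real_derivative
      - (\<Sum>a\<in>UNIV. \<Sum>b\<in>UNIV. M $ i $ a * G' a b * M $ b $ j)) (at t within S)"
    by simp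
  then show ?thesis
    unfolding M_def has_field_derivative_def
    by (rule has_derivative_transform_eventually[OF _ evF Ft tS])
qed






lemma DERIV_eqI: "(f has_field_derivative X) F \<Longrightarrow> X = Y \<Longrightarrow> (f has_field_derivative Y) F"
  by simp

lemma prod_upd_l:
  assumes "length J = q" "u < q"
  shows "(\<Prod>w<q. f ((J[u:=b])!w) (K!w)) = f b (K!u) * (\<Prod>w\<in>{..<q}-{u}. f (J!w) (K!w))"
proof -
  have "(\<Prod>w<q. f ((J[u:=b])!w) (K!w)) = f ((J[u:=b])!u) (K!u) * (\<Prod>w\<in>{..<q}-{u}. f ((J[u:=b])!w) (K!w))"
    using assms by (simp add: prod.remove)
  also have "(\<Prod>w\<in>{..<q}-{u}. f ((J[u:=b])!w) (K!w)) = (\<Prod>w\<in>{..<q}-{u}. f (J!w) (K!w))"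
    by (rule prod.cong) auto
  finally show ?thesis using assms by simp
qed

lemma prod_upd_r:
  assumes "length K = q" "u < q"
  shows "(\<Prod>w<q. f (J!w) ((K[u:=b])!w)) = f (J!u) b * (\<Prod>w\<in>{..<q}-{u}. f (J!w) (K!w))"
proof -
  have "(\<Prod>w<q. f (J!w) ((K[u:=b])!w)) = f (J!u) ((K[u:=b])!u) * (\<Prod>w\<in>{..<q}-{u}. f (J!w) ((K[u:=b])!w))"
    using assms by (simp add: prod.remove)
  also have "(\<Prod>w\<in>{..<q}-{u}. f (J!w) ((K[u:=b])!w)) = (\<Prod>w\<in>{..<q}-{u}. f (J!w) (K!w))"
    by (rule prod.cong) auto
  finally show ?thesis using assms by simp
qed

lemma XA:
  fixes M \<Gamma> :: "'n::finite \<Rightarrow> 'n \<Rightarrow> real" and Av Bv :: "'n list \<Rightarrow> real"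
  assumes u: "u < q" and Msym: "\<And>a b. M a b = M b a"
  shows "(\<Sum>I\<in>tuples q. \<Sum>K\<in>tuples q. (\<Prod>w<q. M (I!w) (K!w)) * (\<Sum>a\<in>UNIV. \<Gamma> a (I!u) * Av (I[u:=a])) * Bv K)
       = (\<Sum>I\<in>tuples q. \<Sum>K\<in>tuples q. (\<Sum>c\<in>UNIV. M (K!u) c * \<Gamma> (I!u) c) * (\<Prod>w\<in>{..<q}-{u}. M (I!w) (K!w)) * Av I * Bv K)"
proof -
  define h where "h = (\<lambda>K I J. (\<Prod>w<q. M (I!w) (K!w)) * \<Gamma> (J!u) (I!u) * Av J * Bv K)"
  have "(\<Sum>I\<in>tuples q. \<Sum>K\<in>tuples q. (\<Prod>w<q. M (I!w) (K!w)) * (\<Sum>a\<in>UNIV. \<Gamma> a (I!u) * Av (I[u:=a])) * Bv K)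
      = (\<Sum>I\<in>tuples q. \<Sum>K\<in>tuples q. \<Sum>a\<in>UNIV. h K I (I[u:=a]))"
  proof (intro sum.cong refl)
    fix I K :: "'n list" assume "I \<in> tuples q"
    then have "length I = q" by (simp add: tuples_def)
    then show "(\<Prod>w<q. M (I!w) (K!w)) * (\<Sum>a\<in>UNIV. \<Gamma> a (I!u) * Av (I[u:=a])) * Bv K = (\<Sum>a\<in>UNIV. h K I (I[u:=a]))"
      unfolding h_def using u by (simp add: sum_distrib_left sum_distrib_right mult.assoc)
  qed
  also have "\<dots> = (\<Sum>K\<in>tuples q. \<Sum>I\<in>tuples q. \<Sum>a\<in>UNIV. h K I (I[u:=a]))"
    by (rule sum.swap)
  also have "\<dots> = (\<Sum>K\<in>tuples q. \<Sum>J\<in>tuples q. \<Sum>b\<in>UNIV. h K (J[u:=b]) J)"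
    by (intro sum.cong refl swap_sum u)
  also have "\<dots> = (\<Sum>K\<in>tuples q. \<Sum>J\<in>tuples q. (\<Sum>c\<in>UNIV. M (K!u) c * \<Gamma> (J!u) c) * (\<Prod>w\<in>{..<q}-{u}. M (J!w) (K!w)) * Av J * Bv K)"
  proof (intro sum.cong refl)
    fix K J :: "'n list" assume "J \<in> tuples q"
    then have l: "length J = q" by (simp add: tuples_def)
    show "(\<Sum>b\<in>UNIV. h K (J[u:=b]) J) = (\<Sum>c\<in>UNIV. M (K!u) c * \<Gamma> (J!u) c) * (\<Prod>w\<in>{..<q}-{u}. M (J!w) (K!w)) * Av J * Bv K"
      unfolding h_def prod_upd_l[OF l u] using l u
      by (simp add: sum_distrib_left sum_distrib_right Msym[of _ "K!u"] ac_simps)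
  qed
  also have "\<dots> = (\<Sum>I\<in>tuples q. \<Sum>K\<in>tuples q. (\<Sum>c\<in>UNIV. M (K!u) c * \<Gamma> (I!u) c) * (\<Prod>w\<in>{..<q}-{u}. M (I!w) (K!w)) * Av I * Bv K)"
    by (rule sum.swap)
  finally show ?thesis .
qed

lemma XB:
  fixes M \<Gamma> :: "'n::finite \<Rightarrow> 'n \<Rightarrow> real" and Av Bv :: "'n list \<Rightarrow> real"
  assumes u: "u < q" and Msym: "\<And>a b. M a b = M b a"
  shows "(\<Sum>I\<in>tuples q. \<Sum>K\<in>tuples q. (\<Prod>w<q. M (I!w) (K!w)) * Av I * (\<Sum>a\<in>UNIV. \<Gamma> a (K!u) * Bv (K[u:=a])))
       = (\<Sum>I\<in>tuples q. \<Sum>K\<in>tuples q. (\<Sum>c\<in>UNIV. M (I!u) c * \<Gamma> (K!u) c) * (\<Prod>w\<in>{..<q}-{u}. M (I!w) (K!w)) * Av I * Bv K)"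
proof -
  have "(\<Sum>I\<in>tuples q. \<Sum>K\<in>tuples q. (\<Prod>w<q. M (I!w) (K!w)) * Av I * (\<Sum>a\<in>UNIV. \<Gamma> a (K!u) * Bv (K[u:=a])))
      = (\<Sum>K\<in>tuples q. \<Sum>I\<in>tuples q. (\<Prod>w<q. M (K!w) (I!w)) * (\<Sum>a\<in>UNIV. \<Gamma> a (K!u) * Bv (K[u:=a])) * Av I)"
    by (subst sum.swap) (simp add: Msym ac_simps)
  also have "\<dots> = (\<Sum>K\<in>tuples q. \<Sum>I\<in>tuples q. (\<Sum>c\<in>UNIV. M (I!u) c * \<Gamma> (K!u) c) * (\<Prod>w\<in>{..<q}-{u}. M (K!w) (I!w)) * Bv K * Av I)"
    by (rule XA[OF u Msym])
  also have "\<dots> = (\<Sum>I\<in>tuples q. \<Sum>K\<in>tuples q. (\<Sum>c\<in>UNIV. M (I!u) c * \<Gamma> (K!u) c) * (\<Prod>w\<in>{..<q}-{u}. M (I!w) (K!w)) * Av I * Bv K)"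
    by (subst sum.swap) (simp add: Msym ac_simps)
  finally show ?thesis .
qed



lemma pd_DERIV:
  assumes "(\<lambda>h. f (y + h *\<^sub>R axis k (1::real))) differentiable (at 0)"
  shows "((\<lambda>h. f (y + h *\<^sub>R axis k (1::real))) has_real_derivative pd k f y) (at 0)"
  using assms unfolding pd_def by (simp add: DERIV_deriv_iff_real_differentiable)

lemma pd_eqI:
  assumes "((\<lambda>h. f (y + h *\<^sub>R axis k (1::real))) has_real_derivative D) (at 0)"
  shows "pd k f y = D"
  using assms unfolding pd_def by (rule DERIV_imp_deriv)

lemma ev_line:
  fixes y v :: "'a::real_normed_vector"
  assumes "open U" "y \<in> U"
  shows "\<forall>\<^sub>F h in nhds 0. y + h *\<^sub>R v \<in> U"
proof -
  have c: "continuous_on UNIV (\<lambda>h::real. y + h *\<^sub>R v)"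
    by (intro continuous_intros)
  have "open ((\<lambda>h::real. y + h *\<^sub>R v) -` U)"
    using open_vimage[OF assms(1) c] .
  moreover have "0 \<in> (\<lambda>h::real. y + h *\<^sub>R v) -` U" using assms by simp
  ultimately show ?thesis
    unfolding eventually_nhds by blast
qed

lemma pd_cong_open:
  fixes f g :: "real^'n::finite \<Rightarrow> real"
  assumes "open U" "y \<in> U" "\<And>z. z \<in> U \<Longrightarrow> f z = g z"
  shows "pd k f y = pd k g y"
  unfolding pd_def
proof (rule deriv_cong_ev)
  show "\<forall>\<^sub>F h in nhds 0. f (y + h *\<^sub>R axis k (1::real)) = g (y + h *\<^sub>R axis k (1::real))"
    using ev_line[OF assms(1,2), of "axis k (1::real)"] by eventually_elim (use assms(3) in auto)
qed simp

lemma diff_cong_open: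
  fixes f g :: "real^'n::finite \<Rightarrow> real"
  assumes "open U" "y \<in> U" "\<And>z. z \<in> U \<Longrightarrow> f z = g z"
    and "(\<lambda>h. f (y + h *\<^sub>R axis k (1::real))) differentiable (at 0)"
  shows "(\<lambda>h. g (y + h *\<^sub>R axis k (1::real))) differentiable (at 0)"
proof -
  have ev: "\<forall>\<^sub>F h in nhds 0. f (y + h *\<^sub>R axis k (1::real)) = g (y + h *\<^sub>R axis k (1::real))"
    using ev_line[OF assms(1,2), of "axis k (1::real)"] by eventually_elim (use assms(3) in auto)
  obtain D where "((\<lambda>h. f (y + h *\<^sub>R axis k (1::real))) has_real_derivative D) (at 0)"
    using assms(4) unfolding real_differentiable_def by blast
  then have "((\<lambda>h. g (y + h *\<^sub>R axis k (1::real))) has_real_derivative D) (at 0)"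
    using DERIV_cong_ev[OF refl ev refl] by blast
  then show ?thesis unfolding real_differentiable_def by blast
qed

lemma matrix_inv_sym:
  fixes A :: "real^'n::finite^'n"
  assumes "det A \<noteq> 0" "\<And>i j. A $ i $ j = A $ j $ i"
  shows "matrix_inv A $ a $ b = matrix_inv A $ b $ a"
proof -
  have AT: "transpose A = A" using assms(2) by (simp add: transpose_def vec_eq_iff)
  let ?M = "matrix_inv A"
  have 1: "A ** ?M = mat 1" and 2: "?M ** A = mat 1" using matrix_inv_props[OF assms(1)] by auto
  have "transpose ?M ** A = mat 1"
    using arg_cong[OF 1, of transpose] by (simp add: matrix_transpose_mul AT transpose_mat)
  then have "transpose ?M = transpose ?M ** (A ** ?M)" using 1 by simp
  also have "\<dots> = ?M" by (simp add: matrix_mul_assoc \<open>transpose ?M ** A = mat 1\<close>)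
  finally have "transpose ?M = ?M" .
  then have "transpose ?M $ a $ b = ?M $ a $ b" by simp
  then show ?thesis by (simp add: transpose_def)
qed

locale chart =
  fixes G :: "real^'n::finite \<Rightarrow> real^'n^'n" and U :: "(real^'n) set"
  assumes openU: "open U"
    and symG: "\<And>y i j. y \<in> U \<Longrightarrow> G y $ i $ j = G y $ j $ i"
    and nzG: "\<And>y. y \<in> U \<Longrightarrow> det (G y) \<noteq> 0"
    and dG: "\<And>y i j k. y \<in> U \<Longrightarrow> (\<lambda>h. G (y + h *\<^sub>R axis k (1::real)) $ i $ j) differentiable (at 0)"
    and ddG: "\<And>y i j k l. y \<in> U \<Longrightarrow> (\<lambda>h. pd k (\<lambda>z. G z $ i $ j) (y + h *\<^sub>R axis l 1)) differentiable (at 0)"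
begin

lemma ginv_sym: "y \<in> U \<Longrightarrow> ginv G y a b = ginv G y b a"
  unfolding ginv_def by (rule matrix_inv_sym[OF nzG symG])

lemma pdG_sym: "y \<in> U \<Longrightarrow> pd k (\<lambda>z. G z $ i $ j) y = pd k (\<lambda>z. G z $ j $ i) y"
  by (rule pd_cong_open[OF openU]) (auto intro: symG)

lemma ginv_D:
  assumes y: "y \<in> U"
  shows "((\<lambda>h. ginv G (y + h *\<^sub>R axis k (1::real)) a b) has_real_derivative
     - (\<Sum>c\<in>UNIV. ginv G y a c * Chr G y b k c + ginv G y b c * Chr G y a k c)) (at 0)"
proof -
  let ?M = "matrix_inv (G y)"
  define D where "D = (\<lambda>i j. pd k (\<lambda>z. G z $ i $ j) y)"
  have dl: "((\<lambda>h. G (y + h *\<^sub>R axis k (1::real)) $ i $ j) has_real_derivative D i j) (at 0)" for i j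
    unfolding D_def by (rule pd_DERIV) (rule dG[OF y])
  have "((\<lambda>h. matrix_inv (G (y + h *\<^sub>R axis k (1::real))) $ a $ b) has_real_derivative
     - (\<Sum>c\<in>UNIV. \<Sum>d\<in>UNIV. matrix_inv (G (y + 0 *\<^sub>R axis k (1::real))) $ a $ c * D c d * matrix_inv (G (y + 0 *\<^sub>R axis k (1::real))) $ d $ b))
      (at 0 within UNIV)"
    by (rule inv_deriv[where G="\<lambda>h. G (y + h *\<^sub>R axis k (1::real))"]) (use dl nzG[OF y] in auto)
  then have 1: "((\<lambda>h. ginv G (y + h *\<^sub>R axis k (1::real)) a b) has_real_derivative
     - (\<Sum>c\<in>UNIV. \<Sum>d\<in>UNIV. ?M $ a $ c * D c d * ?M $ d $ b)) (at 0)"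
    unfolding ginv_def by simp
  have Dsym: "D i j = D j i" for i j unfolding D_def by (rule pdG_sym[OF y])
  have Msym: "?M $ i $ j = ?M $ j $ i" for i j using ginv_sym[OF y] unfolding ginv_def by blast
  have Chr_eq: "Chr G y l j i = (1/2) * (\<Sum>m\<in>UNIV. ?M $ l $ m * (D m i + pd i (\<lambda>z. G z $ m $ k) y - pd m (\<lambda>z. G z $ k $ i) y))"
    if "j = k" for l j i
    unfolding Chr_def ginv_def D_def using that by simp
  have "(\<Sum>c\<in>UNIV. ginv G y a c * Chr G y b k c + ginv G y b c * Chr G y a k c)
      = (\<Sum>c\<in>UNIV. \<Sum>m\<in>UNIV. (1/2) * (?M $ a $ c * ?M $ b $ m * (D m c + pd c (\<lambda>z. G z $ m $ k) y - pd m (\<lambda>z. G z $ k $ c) y)))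
      + (\<Sum>c\<in>UNIV. \<Sum>m\<in>UNIV. (1/2) * (?M $ b $ c * ?M $ a $ m * (D m c + pd c (\<lambda>z. G z $ m $ k) y - pd m (\<lambda>z. G z $ k $ c) y)))"
    unfolding sum.distrib Chr_eq[OF refl] ginv_def
    by (simp add: sum_distrib_left algebra_simps)
  also have "\<dots> = (\<Sum>c\<in>UNIV. \<Sum>m\<in>UNIV. (1/2) * (?M $ a $ c * ?M $ b $ m * (D m c + pd c (\<lambda>z. G z $ m $ k) y - pd m (\<lambda>z. G z $ k $ c) y)))
      + (\<Sum>c\<in>UNIV. \<Sum>m\<in>UNIV. (1/2) * (?M $ b $ m * ?M $ a $ c * (D c m + pd m (\<lambda>z. G z $ c $ k) y - pd c (\<lambda>z. G z $ k $ m) y)))"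
    by (subst (2) sum.swap) (rule refl)
  also have "\<dots> = (\<Sum>c\<in>UNIV. \<Sum>m\<in>UNIV. ?M $ a $ c * D c m * ?M $ m $ b)"
    unfolding sum.distrib[symmetric]
  proof (intro sum.cong refl)
    fix c m
    have "pd c (\<lambda>z. G z $ m $ k) y = pd c (\<lambda>z. G z $ k $ m) y" by (rule pdG_sym[OF y])
    moreover have "pd m (\<lambda>z. G z $ c $ k) y = pd m (\<lambda>z. G z $ k $ c) y" by (rule pdG_sym[OF y])
    ultimately show "(1/2) * (?M $ a $ c * ?M $ b $ m * (D m c + pd c (\<lambda>z. G z $ m $ k) y - pd m (\<lambda>z. G z $ k $ c) y))
      + (1/2) * (?M $ b $ m * ?M $ a $ c * (D c m + pd m (\<lambda>z. G z $ c $ k) y - pd c (\<lambda>z. G z $ k $ m) y))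
      = ?M $ a $ c * D c m * ?M $ m $ b"
      using Dsym[of m c] Msym[of m b] by (simp add: algebra_simps)
  qed
  finally show ?thesis using 1 by simp
qed

end




lemma swap3: "(\<Sum>I\<in>A. \<Sum>K\<in>B. \<Sum>u\<in>C. f I K u) = (\<Sum>u\<in>C. \<Sum>I\<in>A. \<Sum>K\<in>B. (f I K u::real))"
proof -
  have "(\<Sum>I\<in>A. \<Sum>K\<in>B. \<Sum>u\<in>C. f I K u) = (\<Sum>I\<in>A. \<Sum>u\<in>C. \<Sum>K\<in>B. f I K u)"
    by (rule sum.cong[OF refl], rule sum.swap)
  also have "\<dots> = (\<Sum>u\<in>C. \<Sum>I\<in>A. \<Sum>K\<in>B. f I K u)" by (rule sum.swap)
  finally show ?thesis .
qed

lemma tinner_alg: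
  fixes M \<Gamma> dM :: "'n::finite \<Rightarrow> 'n \<Rightarrow> real" and Av Bv dAv dBv :: "'n list \<Rightarrow> real"
  assumes Msym: "\<And>a b. M a b = M b a"
    and dMdef: "\<And>a b. dM a b = - (\<Sum>c\<in>UNIV. M a c * \<Gamma> b c + M b c * \<Gamma> a c)"
  shows "(\<Sum>I\<in>tuples q. \<Sum>K\<in>tuples q.
            (\<Sum>u<q. dM (I!u) (K!u) * (\<Prod>w\<in>{..<q}-{u}. M (I!w) (K!w))) * Av I * Bv K
          + (\<Prod>w<q. M (I!w) (K!w)) * dAv I * Bv K + (\<Prod>w<q. M (I!w) (K!w)) * Av I * dBv K)
   = (\<Sum>I\<in>tuples q. \<Sum>K\<in>tuples q. (\<Prod>w<q. M (I!w) (K!w)) * (dAv I - (\<Sum>u<q. \<Sum>a\<in>UNIV. \<Gamma> a (I!u) * Av (I[u:=a]))) * Bv K)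
   + (\<Sum>I\<in>tuples q. \<Sum>K\<in>tuples q. (\<Prod>w<q. M (I!w) (K!w)) * Av I * (dBv K - (\<Sum>u<q. \<Sum>a\<in>UNIV. \<Gamma> a (K!u) * Bv (K[u:=a]))))"
proof -
  let ?P = "\<lambda>I K. (\<Prod>w<q. M (I!w) (K!w))"
  let ?Pr = "\<lambda>u I K. (\<Prod>w\<in>{..<q}-{u}. M (I!w) (K!w))"
  define RA where "RA = (\<lambda>u. \<Sum>I\<in>tuples q. \<Sum>K\<in>tuples q. (\<Sum>c\<in>UNIV. M (K!u) c * \<Gamma> (I!u) c) * ?Pr u I K * Av I * Bv K)"
  define RB where "RB = (\<lambda>u. \<Sum>I\<in>tuples q. \<Sum>K\<in>tuples q. (\<Sum>c\<in>UNIV. M (I!u) c * \<Gamma> (K!u) c) * ?Pr u I K * Av I * Bv K)"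
  have SA: "(\<Sum>I\<in>tuples q. \<Sum>K\<in>tuples q. ?P I K * (\<Sum>u<q. \<Sum>a\<in>UNIV. \<Gamma> a (I!u) * Av (I[u:=a])) * Bv K) = (\<Sum>u<q. RA u)"
  proof -
    have "(\<Sum>I\<in>tuples q. \<Sum>K\<in>tuples q. ?P I K * (\<Sum>u<q. \<Sum>a\<in>UNIV. \<Gamma> a (I!u) * Av (I[u:=a])) * Bv K)
        = (\<Sum>I\<in>tuples q. \<Sum>K\<in>tuples q. \<Sum>u<q. ?P I K * (\<Sum>a\<in>UNIV. \<Gamma> a (I!u) * Av (I[u:=a])) * Bv K)"
      by (simp add: sum_distrib_left sum_distrib_right)
    also have "\<dots> = (\<Sum>u<q. \<Sum>I\<in>tuples q. \<Sum>K\<in>tuples q. ?P I K * (\<Sum>a\<in>UNIV. \<Gamma> a (I!u) * Av (I[u:=a])) * Bv K)"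
      by (rule swap3)
    also have "\<dots> = (\<Sum>u<q. RA u)"
      unfolding RA_def by (intro sum.cong refl XA Msym) simp
    finally show ?thesis .
  qed
  have SB: "(\<Sum>I\<in>tuples q. \<Sum>K\<in>tuples q. ?P I K * Av I * (\<Sum>u<q. \<Sum>a\<in>UNIV. \<Gamma> a (K!u) * Bv (K[u:=a]))) = (\<Sum>u<q. RB u)"
  proof -
    have "(\<Sum>I\<in>tuples q. \<Sum>K\<in>tuples q. ?P I K * Av I * (\<Sum>u<q. \<Sum>a\<in>UNIV. \<Gamma> a (K!u) * Bv (K[u:=a])))
        = (\<Sum>I\<in>tuples q. \<Sum>K\<in>tuples q. \<Sum>u<q. ?P I K * Av I * (\<Sum>a\<in>UNIV. \<Gamma> a (K!u) * Bv (K[u:=a])))"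
      by (simp add: sum_distrib_left sum_distrib_right)
    also have "\<dots> = (\<Sum>u<q. \<Sum>I\<in>tuples q. \<Sum>K\<in>tuples q. ?P I K * Av I * (\<Sum>a\<in>UNIV. \<Gamma> a (K!u) * Bv (K[u:=a])))"
      by (rule swap3)
    also have "\<dots> = (\<Sum>u<q. RB u)"
      unfolding RB_def by (intro sum.cong refl XB Msym) simp
    finally show ?thesis .
  qed
  have SdP: "(\<Sum>I\<in>tuples q. \<Sum>K\<in>tuples q. (\<Sum>u<q. dM (I!u) (K!u) * ?Pr u I K) * Av I * Bv K) = - (\<Sum>u<q. RA u + RB u)"
  proof -
    have "(\<Sum>I\<in>tuples q. \<Sum>K\<in>tuples q. (\<Sum>u<q. dM (I!u) (K!u) * ?Pr u I K) * Av I * Bv K)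
       = (\<Sum>I\<in>tuples q. \<Sum>K\<in>tuples q. \<Sum>u<q. dM (I!u) (K!u) * ?Pr u I K * Av I * Bv K)"
      by (simp add: sum_distrib_right)
    also have "\<dots> = (\<Sum>u<q. \<Sum>I\<in>tuples q. \<Sum>K\<in>tuples q. dM (I!u) (K!u) * ?Pr u I K * Av I * Bv K)"
      by (rule swap3)
    also have "\<dots> = (\<Sum>u<q. - (RA u + RB u))"
    proof (rule sum.cong[OF refl])
      fix u
      show "(\<Sum>I\<in>tuples q. \<Sum>K\<in>tuples q. dM (I!u) (K!u) * ?Pr u I K * Av I * Bv K) = - (RA u + RB u)"
        unfolding RA_def RB_def sum.distrib[symmetric] sum_negf[symmetric]
        by (intro sum.cong refl) (simp add: dMdef sum.distrib sum_distrib_right algebra_simps)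
    qed
    also have "\<dots> = - (\<Sum>u<q. RA u + RB u)" by (rule sum_negf)
    finally show ?thesis .
  qed
  show ?thesis
    using SA SB SdP
    by (simp add: sum.distrib algebra_simps sum_subtractf)
qed


lemma cov_snoc: "cov G A y (I @ [k]) = pd k (\<lambda>z. A z I) y - (\<Sum>u<length I. \<Sum>a\<in>UNIV. Chr G y a k (I!u) * A y (I[u:=a]))"
  by (simp add: cov_def Let_def)

context chart begin

lemma pd_tinner:
  assumes y: "y \<in> U"
    and dA: "\<And>I. (\<lambda>h. A (y + h *\<^sub>R axis k (1::real)) I) differentiable (at 0)"
    and dB: "\<And>K. (\<lambda>h. B (y + h *\<^sub>R axis k (1::real)) K) differentiable (at 0)"
  shows "((\<lambda>h. tinner G (y + h *\<^sub>R axis k 1) q (A (y + h *\<^sub>R axis k 1)) (B (y + h *\<^sub>R axis k 1))) has_real_derivative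
     tinner G y q (\<lambda>I. cov G A y (I @ [k])) (B y) + tinner G y q (A y) (\<lambda>K. cov G B y (K @ [k]))) (at 0)"
proof -
  define M where "M = (\<lambda>a b. ginv G y a b)"
  define \<Gamma> where "\<Gamma> = (\<lambda>a c. Chr G y a k c)"
  define dM where "dM = (\<lambda>a b. - (\<Sum>c\<in>UNIV. M a c * \<Gamma> b c + M b c * \<Gamma> a c))"
  have dMh: "((\<lambda>h. ginv G (y + h *\<^sub>R axis k 1) a b) has_real_derivative dM a b) (at 0)" for a b
    unfolding dM_def M_def \<Gamma>_def by (rule ginv_D[OF y])
  have dP: "((\<lambda>h. \<Prod>w<q. ginv G (y + h *\<^sub>R axis k 1) (I!w) (K!w)) has_real_derivative
        (\<Sum>u<q. dM (I!u) (K!u) * (\<Prod>w\<in>{..<q}-{u}. M (I!w) (K!w)))) (at 0)" for I K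
    by (rule DERIV_eqI[OF has_field_derivative_prod[of "{..<q}" "\<lambda>w h. ginv G (y + h *\<^sub>R axis k 1) (I!w) (K!w)" "\<lambda>w. dM (I!w) (K!w)" 0]])
       (auto simp: M_def intro: dMh)
  have dAh: "((\<lambda>h. A (y + h *\<^sub>R axis k 1) I) has_real_derivative pd k (\<lambda>z. A z I) y) (at 0)" for I
    by (rule pd_DERIV[OF dA])
  have dBh: "((\<lambda>h. B (y + h *\<^sub>R axis k 1) K) has_real_derivative pd k (\<lambda>z. B z K) y) (at 0)" for K
    by (rule pd_DERIV[OF dB])
  have main: "((\<lambda>h. tinner G (y + h *\<^sub>R axis k 1) q (A (y + h *\<^sub>R axis k 1)) (B (y + h *\<^sub>R axis k 1))) has_real_derivative
       (\<Sum>I\<in>tuples q. \<Sum>K\<in>tuples q.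
            (\<Sum>u<q. dM (I!u) (K!u) * (\<Prod>w\<in>{..<q}-{u}. M (I!w) (K!w))) * A y I * B y K
          + (\<Prod>w<q. M (I!w) (K!w)) * pd k (\<lambda>z. A z I) y * B y K + (\<Prod>w<q. M (I!w) (K!w)) * A y I * pd k (\<lambda>z. B z K) y))
       (at 0)"
    unfolding tinner_def
    apply (intro DERIV_sum)
    apply (rule DERIV_eqI[OF DERIV_mult[OF DERIV_mult[OF dP dAh] dBh]])
    apply (simp add: M_def algebra_simps)
    done
  have Msym: "M a b = M b a" for a b unfolding M_def by (rule ginv_sym[OF y])
  have eqA: "tinner G y q (\<lambda>I. cov G A y (I @ [k])) (B y) =
     (\<Sum>I\<in>tuples q. \<Sum>K\<in>tuples q. (\<Prod>w<q. M (I!w) (K!w)) * (pd k (\<lambda>z. A z I) y - (\<Sum>u<q. \<Sum>a\<in>UNIV. \<Gamma> a (I!u) * A y (I[u:=a]))) * B y K)"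
    unfolding tinner_def M_def \<Gamma>_def
    by (intro sum.cong refl) (simp add: cov_snoc tuples_def)
  have eqB: "tinner G y q (A y) (\<lambda>K. cov G B y (K @ [k])) =
     (\<Sum>I\<in>tuples q. \<Sum>K\<in>tuples q. (\<Prod>w<q. M (I!w) (K!w)) * A y I * (pd k (\<lambda>z. B z K) y - (\<Sum>u<q. \<Sum>a\<in>UNIV. \<Gamma> a (K!u) * B y (K[u:=a]))))"
    unfolding tinner_def M_def \<Gamma>_def
    by (intro sum.cong refl) (simp add: cov_snoc tuples_def)
  show ?thesis
    unfolding eqA eqB
    by (rule DERIV_eqI[OF main], rule tinner_alg[OF Msym]) (simp add: dM_def)
qed

end




lemma tinner_comm:
  assumes "\<And>a b. ginv G x a b = ginv G x b a"
  shows "tinner G x q A B = tinner G x q B A"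
  unfolding tinner_def by (subst sum.swap) (simp add: assms ac_simps)

lemma tinner_lin:
  fixes S :: "'b set"
  assumes "finite S"
  shows "tinner G x q (\<lambda>I. F I - (\<Sum>a\<in>S. c a * H a I)) B = tinner G x q F B - (\<Sum>a\<in>S. c a * tinner G x q (H a) B)"
proof -
  have "(\<Sum>a\<in>S. c a * tinner G x q (H a) B) =
     (\<Sum>a\<in>S. \<Sum>I\<in>tuples q. \<Sum>K\<in>tuples q. (\<Prod>s<q. ginv G x (I ! s) (K ! s)) * (c a * H a I) * B K)"
    unfolding tinner_def by (simp add: sum_distrib_left ac_simps)
  also have "\<dots> = (\<Sum>I\<in>tuples q. \<Sum>K\<in>tuples q. \<Sum>a\<in>S. (\<Prod>s<q. ginv G x (I ! s) (K ! s)) * (c a * H a I) * B K)"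
    by (rule swap3[symmetric])
  finally show ?thesis
    unfolding tinner_def
    by (simp add: sum_subtractf[symmetric] sum_distrib_left sum_distrib_right algebra_simps)
qed

lemma tinner_sum_lin:
  "tinner G x q (\<lambda>I. \<Sum>i\<in>(UNIV::'a::finite set). \<Sum>j\<in>(UNIV::'b::finite set). c i j * F i j I) B
   = (\<Sum>i\<in>UNIV. \<Sum>j\<in>UNIV. c i j * tinner G x q (F i j) B)"
proof -
  have "(\<Sum>i\<in>UNIV. \<Sum>j\<in>UNIV. c i j * tinner G x q (F i j) B) =
     (\<Sum>i\<in>UNIV. \<Sum>j\<in>UNIV. \<Sum>I\<in>tuples q. \<Sum>K\<in>tuples q. (\<Prod>s<q. ginv G x (I ! s) (K ! s)) * (c i j * F i j I) * B K)"
    unfolding tinner_def by (simp add: sum_distrib_left ac_simps)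
  also have "\<dots> = (\<Sum>i\<in>UNIV. \<Sum>I\<in>tuples q. \<Sum>K\<in>tuples q. \<Sum>j\<in>UNIV. (\<Prod>s<q. ginv G x (I ! s) (K ! s)) * (c i j * F i j I) * B K)"
    by (intro sum.cong refl swap3[symmetric])
  also have "\<dots> = (\<Sum>I\<in>tuples q. \<Sum>K\<in>tuples q. \<Sum>i\<in>UNIV. \<Sum>j\<in>UNIV. (\<Prod>s<q. ginv G x (I ! s) (K ! s)) * (c i j * F i j I) * B K)"
    by (rule swap3[symmetric])
  finally show ?thesis
    unfolding tinner_def
    by (simp add: sum_distrib_left sum_distrib_right algebra_simps)
qed

lemma sum_tuples_Suc:
  "(\<Sum>L\<in>tuples (Suc q). f L) = (\<Sum>I\<in>tuples q. \<Sum>i\<in>(UNIV::'n::finite set). (f (I @ [i]) :: real))"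
proof -
  have "(\<Sum>L\<in>tuples (Suc q). f L) = (\<Sum>(I,i)\<in>tuples q \<times> (UNIV::'n set). f (I @ [i]))"
  proof -
    have bl: "\<And>L::'n list. length L = Suc q \<Longrightarrow> butlast L @ [last L] = L"
      by (metis append_butlast_last_id list.size(3) nat.distinct(1))
    show ?thesis
      by (rule sum.reindex_bij_witness[where i="\<lambda>(I,i). I @ [i]" and j="\<lambda>L. (butlast L, last L)"])
         (auto simp: tuples_def bl)
  qed
  also have "\<dots> = (\<Sum>I\<in>tuples q. \<Sum>i\<in>(UNIV::'n set). f (I @ [i]))"
    by (simp add: sum.cartesian_product)
  finally show ?thesis .
qed

lemma tinner_Suc:
  fixes C D :: "'n::finite list \<Rightarrow> real"
  shows "tinner G x (Suc q) C D = (\<Sum>i\<in>UNIV. \<Sum>j\<in>UNIV. ginv G x i j * tinner G x q (\<lambda>I. C (I @ [i])) (\<lambda>K. D (K @ [j])))"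
proof -
  let ?P = "\<lambda>I K. \<Prod>s<q. ginv G x (I ! s) (K ! s)"
  have pr: "(\<Prod>s<Suc q. ginv G x ((I @ [i]) ! s) ((K @ [j]) ! s)) = ?P I K * ginv G x i j"
    if "I \<in> tuples q" "K \<in> tuples q" for I K i j
  proof -
    have l: "length I = q" "length K = q" using that by (auto simp: tuples_def)
    have "(\<Prod>s<q. ginv G x ((I @ [i]) ! s) ((K @ [j]) ! s)) = ?P I K"
      by (rule prod.cong) (auto simp: nth_append l)
    then show ?thesis by (simp add: l nth_append)
  qed
  have "tinner G x (Suc q) C D = (\<Sum>I\<in>tuples q. \<Sum>i\<in>UNIV. \<Sum>K\<in>tuples q. \<Sum>j\<in>UNIV. ?P I K * ginv G x i j * C (I @ [i]) * D (K @ [j]))"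
    unfolding tinner_def sum_tuples_Suc
  proof (intro sum.cong refl)
    fix I K :: "'n list" and i j :: 'n assume "I \<in> tuples q" "K \<in> tuples q"
    show "(\<Prod>s<Suc q. ginv G x ((I @ [i]) ! s) ((K @ [j]) ! s)) * C (I @ [i]) * D (K @ [j]) =
          ?P I K * ginv G x i j * C (I @ [i]) * D (K @ [j])"
      unfolding pr[OF \<open>I \<in> tuples q\<close> \<open>K \<in> tuples q\<close>] ..
  qed
  also have "\<dots> = (\<Sum>I\<in>tuples q. \<Sum>K\<in>tuples q. \<Sum>i\<in>UNIV. \<Sum>j\<in>UNIV. ?P I K * ginv G x i j * C (I @ [i]) * D (K @ [j]))"
    by (intro sum.cong refl sum.swap)
  also have "\<dots> = (\<Sum>i\<in>UNIV. \<Sum>I\<in>tuples q. \<Sum>K\<in>tuples q. \<Sum>j\<in>UNIV. ?P I K * ginv G x i j * C (I @ [i]) * D (K @ [j]))"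
    by (rule swap3)
  also have "\<dots> = (\<Sum>i\<in>UNIV. \<Sum>j\<in>UNIV. \<Sum>I\<in>tuples q. \<Sum>K\<in>tuples q. ?P I K * ginv G x i j * C (I @ [i]) * D (K @ [j]))"
    by (intro sum.cong refl swap3)
  finally show ?thesis
    unfolding tinner_def by (simp add: sum_distrib_left ac_simps)
qed

context chart begin

lemma ginv_diff: "y \<in> U \<Longrightarrow> (\<lambda>h. ginv G (y + h *\<^sub>R axis k (1::real)) a b) differentiable (at 0)"
  using ginv_D unfolding real_differentiable_def by blast

lemma Chr_diff: "y \<in> U \<Longrightarrow> (\<lambda>h. Chr G (y + h *\<^sub>R axis k (1::real)) l i j) differentiable (at 0)"
  unfolding Chr_def
  by (intro differentiable_mult differentiable_const differentiable_sum ballI finite_class.finite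
      differentiable_add differentiable_diff ginv_diff ddG)

end


context chart begin

lemma lap_tinner:
  assumes x: "x \<in> U"
    and dX: "\<And>y I k. y \<in> U \<Longrightarrow> (\<lambda>h. X (y + h *\<^sub>R axis k (1::real)) I) differentiable (at 0)"
    and ddX: "\<And>y I k l. y \<in> U \<Longrightarrow> (\<lambda>h. pd k (\<lambda>z. X z I) (y + h *\<^sub>R axis l (1::real))) differentiable (at 0)"
  shows "lap G (\<lambda>y. tinner G y p (X y) (X y)) x =
     2 * tinner G x p (\<lambda>I. \<Sum>j\<in>UNIV. \<Sum>k\<in>UNIV. ginv G x j k * cov G (cov G X) x (I @ [j, k])) (X x)
     + 2 * tinner G x (Suc p) (cov G X x) (cov G X x)"
proof -
  define f where "f = (\<lambda>y. tinner G y p (X y) (X y))"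
  define Ai where "Ai = (\<lambda>i y I. cov G X y (I @ [i]))"
  have pdf: "pd i f y = 2 * tinner G y p (Ai i y) (X y)" if "y \<in> U" for i y
  proof -
    have "pd i f y = tinner G y p (Ai i y) (X y) + tinner G y p (X y) (Ai i y)"
      unfolding f_def Ai_def by (rule pd_eqI, rule pd_tinner[OF that dX[OF that] dX[OF that]])
    moreover have "tinner G y p (X y) (Ai i y) = tinner G y p (Ai i y) (X y)"
      by (rule tinner_comm) (rule ginv_sym[OF that])
    ultimately show ?thesis by simp
  qed
  have dAi: "(\<lambda>h. Ai i (x + h *\<^sub>R axis j (1::real)) I) differentiable (at 0)" for i j I
    unfolding Ai_def cov_snoc
    by (intro differentiable_diff differentiable_sum differentiable_mult ballI finite_class.finite finite_lessThan
        ddX[OF x] Chr_diff[OF x] dX[OF x])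
  have pdpdf: "pd j (\<lambda>y. pd i f y) x = 2 * (tinner G x p (\<lambda>I. cov G (Ai i) x (I @ [j])) (X x) + tinner G x p (Ai i x) (\<lambda>K. cov G X x (K @ [j])))" for i j
  proof -
    have "pd j (\<lambda>y. pd i f y) x = pd j (\<lambda>y. 2 * tinner G y p (Ai i y) (X y)) x"
      by (rule pd_cong_open[OF openU x]) (simp add: pdf)
    also have "\<dots> = 2 * (tinner G x p (\<lambda>I. cov G (Ai i) x (I @ [j])) (X x) + tinner G x p (Ai i x) (\<lambda>K. cov G X x (K @ [j])))"
      by (rule pd_eqI, rule DERIV_cmult, rule pd_tinner[OF x dAi dX[OF x]])
    finally show ?thesis .
  qed
  have covcov: "cov G (cov G X) x (I @ [i, j]) = cov G (Ai i) x (I @ [j]) - (\<Sum>a\<in>UNIV. Chr G x a j i * Ai a x I)" for I i j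
  proof -
    have "cov G (cov G X) x (I @ [i, j]) = cov G (cov G X) x ((I @ [i]) @ [j])" by simp
    also have "\<dots> = pd j (\<lambda>z. cov G X z (I @ [i])) x - (\<Sum>u<Suc (length I). \<Sum>a\<in>UNIV. Chr G x a j ((I@[i])!u) * cov G X x ((I@[i])[u:=a]))"
      unfolding cov_snoc by simp
    also have "\<dots> = pd j (\<lambda>z. cov G X z (I @ [i])) x - (\<Sum>u<length I. \<Sum>a\<in>UNIV. Chr G x a j (I!u) * cov G X x (I[u:=a] @ [i]))
        - (\<Sum>a\<in>UNIV. Chr G x a j i * cov G X x (I @ [a]))"
    proof -
      have "(\<Sum>u<length I. \<Sum>a\<in>UNIV. Chr G x a j ((I@[i])!u) * cov G X x ((I@[i])[u:=a]))
          = (\<Sum>u<length I. \<Sum>a\<in>UNIV. Chr G x a j (I!u) * cov G X x (I[u:=a] @ [i]))"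
        by (intro sum.cong refl) (simp add: nth_append list_update_append)
      then show ?thesis by (simp add: list_update_append)
    qed
    also have "\<dots> = cov G (Ai i) x (I @ [j]) - (\<Sum>a\<in>UNIV. Chr G x a j i * Ai a x I)"
      unfolding Ai_def cov_snoc by simp
    finally show ?thesis .
  qed
  have lapf: "cov G (cov G (\<lambda>y _. f y)) x [i, j] = pd j (\<lambda>y. pd i f y) x - (\<Sum>a\<in>UNIV. Chr G x a j i * pd a f x)" for i j
    by (simp add: cov_def Let_def)
  have trm: "cov G (cov G (\<lambda>y _. f y)) x [i, j] = 2 * tinner G x p (\<lambda>I. cov G (cov G X) x (I @ [i, j])) (X x) + 2 * tinner G x p (Ai i x) (Ai j x)" for i j
  proof -
    have "tinner G x p (\<lambda>I. cov G (cov G X) x (I @ [i, j])) (X x)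
        = tinner G x p (\<lambda>I. cov G (Ai i) x (I @ [j]) - (\<Sum>a\<in>UNIV. Chr G x a j i * Ai a x I)) (X x)"
      unfolding covcov ..
    also have "\<dots> = tinner G x p (\<lambda>I. cov G (Ai i) x (I @ [j])) (X x) - (\<Sum>a\<in>UNIV. Chr G x a j i * tinner G x p (Ai a x) (X x))"
      by (rule tinner_lin) simp
    finally have 1: "tinner G x p (\<lambda>I. cov G (cov G X) x (I @ [i, j])) (X x) = \<dots>" .
    have 2: "(\<lambda>K. cov G X x (K @ [j])) = Ai j x" unfolding Ai_def ..
    show ?thesis
      unfolding lapf pdpdf 1 pdf[OF x] 2
      by (simp add: sum_distrib_left algebra_simps)
  qed
  have "lap G f x = (\<Sum>i\<in>UNIV. \<Sum>j\<in>UNIV. ginv G x i j * (2 * tinner G x p (\<lambda>I. cov G (cov G X) x (I @ [i, j])) (X x) + 2 * tinner G x p (Ai i x) (Ai j x)))"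
    unfolding lap_def trm ..
  also have "\<dots> = 2 * (\<Sum>i\<in>UNIV. \<Sum>j\<in>UNIV. ginv G x i j * tinner G x p (\<lambda>I. cov G (cov G X) x (I @ [i, j])) (X x))
      + 2 * (\<Sum>i\<in>UNIV. \<Sum>j\<in>UNIV. ginv G x i j * tinner G x p (Ai i x) (Ai j x))"
    by (simp add: sum_distrib_left sum.distrib algebra_simps)
  also have "(\<Sum>i\<in>UNIV. \<Sum>j\<in>UNIV. ginv G x i j * tinner G x p (\<lambda>I. cov G (cov G X) x (I @ [i, j])) (X x))
      = tinner G x p (\<lambda>I. \<Sum>j\<in>UNIV. \<Sum>k\<in>UNIV. ginv G x j k * cov G (cov G X) x (I @ [j, k])) (X x)"
    by (rule tinner_sum_lin[symmetric])
  also have "(\<Sum>i\<in>UNIV. \<Sum>j\<in>UNIV. ginv G x i j * tinner G x p (Ai i x) (Ai j x)) = tinner G x (Suc p) (cov G X x) (cov G X x)"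
    unfolding tinner_Suc Ai_def ..
  finally show ?thesis unfolding f_def .
qed

end




lemma posdef_det:
  fixes A :: "real^'n::finite^'n"
  assumes "\<And>v. v \<noteq> 0 \<Longrightarrow> v \<bullet> (A *v v) > 0"
  shows "det A \<noteq> 0"
proof -
  have "\<forall>x. A *v x = 0 \<longrightarrow> x = 0"
  proof (intro allI impI)
    fix x assume "A *v x = 0"
    show "x = 0"
    proof (rule ccontr)
      assume "x \<noteq> 0"
      then have "x \<bullet> (A *v x) > 0" by (rule assms)
      then show False using \<open>A *v x = 0\<close> by simp
    qed
  qed
  then have "\<exists>B. B ** A = mat 1" using matrix_left_invertible_ker by blast
  then have "invertible A" using invertible_left_inverse by blast
  then show ?thesis using invertible_det_nz by blast
qed

lemma basis_e: "((0::real), axis k (1::real)) \<in> (Basis :: (real \<times> (real^'n::finite)) set)"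
  by (auto simp: Basis_prod_def Basis_vec_def)

lemma Cinf_line1:
  fixes \<phi> :: "real \<Rightarrow> real^'n::finite \<Rightarrow> real"
  assumes "Cinf_on W (\<lambda>z. \<phi> (fst z) (snd z))" "(t, y) \<in> W"
  shows "(\<lambda>h. \<phi> t (y + h *\<^sub>R axis k (1::real))) differentiable (at 0)"
proof -
  have H: "\<forall>x\<in>W. \<forall>v\<in>Basis. (\<lambda>h. iter_pd [] (\<lambda>z. \<phi> (fst z) (snd z)) (x + h *\<^sub>R v)) differentiable (at 0)"
  proof -
    have "set ([] :: (real \<times> (real^'n)) list) \<subseteq> Basis" by simp
    from assms(1)[unfolded Cinf_on_def, rule_format, OF this] show ?thesis by (rule conjunct2)
  qed
  have "(\<lambda>h. iter_pd [] (\<lambda>z. \<phi> (fst z) (snd z)) ((t, y) + h *\<^sub>R (0, axis k 1))) differentiable (at 0)"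
    by (rule H[rule_format, OF assms(2) basis_e])
  then show ?thesis by simp
qed

lemma Cinf_line2:
  fixes \<phi> :: "real \<Rightarrow> real^'n::finite \<Rightarrow> real"
  assumes "Cinf_on W (\<lambda>z. \<phi> (fst z) (snd z))" "(t, y) \<in> W"
  shows "(\<lambda>h. pd k (\<phi> t) (y + h *\<^sub>R axis l (1::real))) differentiable (at 0)"
proof -
  have "set [((0::real), axis k (1::real))] \<subseteq> Basis" using basis_e by simp
  have H: "\<forall>x\<in>W. \<forall>v\<in>Basis. (\<lambda>h. iter_pd [(0, axis k 1)] (\<lambda>z. \<phi> (fst z) (snd z)) (x + h *\<^sub>R v)) differentiable (at 0)"
    using assms(1)[unfolded Cinf_on_def, rule_format, OF \<open>set [((0::real), axis k (1::real))] \<subseteq> Basis\<close>] by (rule conjunct2)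
  have "(\<lambda>h. iter_pd [(0, axis k 1)] (\<lambda>z. \<phi> (fst z) (snd z)) ((t, y) + h *\<^sub>R (0, axis l 1))) differentiable (at 0)"
    by (rule H[rule_format, OF assms(2) basis_e])
  moreover have "(\<lambda>h. iter_pd [(0, axis k 1)] (\<lambda>z. \<phi> (fst z) (snd z)) ((t, y) + h *\<^sub>R (0, axis l 1)))
      = (\<lambda>h. pd k (\<phi> t) (y + h *\<^sub>R axis l (1::real)))"
    by (simp add: pd_def algebra_simps)
  ultimately show ?thesis by simp
qed

lemma DERIV_prod_within:
  fixes f :: "'i \<Rightarrow> real \<Rightarrow> real"
  assumes "\<And>i. i \<in> A \<Longrightarrow> (f i has_real_derivative f' i) (at x within S)"
  shows "((\<lambda>u. \<Prod>i\<in>A. f i u) has_real_derivative (\<Sum>i\<in>A. f' i * (\<Prod>j\<in>A-{i}. f j x))) (at x within S)"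
proof -
  have "((\<lambda>u. \<Prod>i\<in>A. f i u) has_derivative (\<lambda>y. \<Sum>i\<in>A. (\<lambda>h. f' i * h) y * (\<Prod>j\<in>A - {i}. f j x))) (at x within S)"
    using assms unfolding has_field_derivative_def
    by (intro has_derivative_prod) auto
  then show ?thesis
    by (rule has_derivative_imp_has_field_derivative) (simp add: sum_distrib_left ac_simps)
qed




definition sw :: "nat \<Rightarrow> nat \<Rightarrow> 'a list \<Rightarrow> 'a list" where
  "sw a b L = L[a := L!b, b := L!a]"

lemma sw_length[simp]: "length (sw a b L) = length L"
  by (simp add: sw_def)

lemma sw_nth: "a < length L \<Longrightarrow> b < length L \<Longrightarrow> a \<noteq> b \<Longrightarrow> w < length L \<Longrightarrow>
  sw a b L ! w = (if w = a then L!b else if w = b then L!a else L!w)"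
  by (simp add: sw_def nth_list_update)

lemma sw_invol: "a < length L \<Longrightarrow> b < length L \<Longrightarrow> a \<noteq> b \<Longrightarrow> sw a b (sw a b L) = L"
  by (rule nth_equalityI) (auto simp: sw_nth)

lemma sum_sw:
  assumes "a < p" "b < p" "a \<noteq> b"
  shows "(\<Sum>I\<in>tuples p. f I) = (\<Sum>I\<in>tuples p. (f (sw a b I) :: real))"
  by (rule sum.reindex_bij_witness[where i="sw a b" and j="sw a b"])
     (use assms in \<open>auto simp: tuples_def sw_invol\<close>)

lemma prod_sw:
  assumes "a < p" "b < p" "a \<noteq> b" "length I = p" "length K = p"
  shows "(\<Prod>w<p. M (sw a b I ! w) (sw a b K ! w)) = (\<Prod>w<p. (M (I!w) (K!w) :: real))"
proof -
  define \<tau> where "\<tau> = (\<lambda>w. if w = a then b else if w = b then a else w)"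
  have "(\<Prod>w<p. M (sw a b I ! w) (sw a b K ! w)) = (\<Prod>w<p. M (I ! \<tau> w) (K ! \<tau> w))"
    by (rule prod.cong) (use assms in \<open>auto simp: sw_nth \<tau>_def\<close>)
  also have "\<dots> = (\<Prod>w<p. M (I!w) (K!w))"
    by (rule prod.reindex_bij_witness[where i=\<tau> and j=\<tau>]) (use assms in \<open>auto simp: \<tau>_def\<close>)
  finally show ?thesis .
qed

lemma T_swap:
  fixes M :: "'n::finite \<Rightarrow> 'n \<Rightarrow> real" and X \<Phi>1 \<Phi>2 :: "'n list \<Rightarrow> real"
  assumes ab: "a < b" "b < p"
    and \<Phi>: "\<And>I. length I = p \<Longrightarrow> \<Phi>1 (sw a b I) = - \<Phi>2 I"
    and X: "\<And>K. length K = p \<Longrightarrow> X (sw a b K) = - X K"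
  shows "(\<Sum>I\<in>tuples p. \<Sum>K\<in>tuples p. (\<Prod>w<p. M (I!w) (K!w)) * \<Phi>1 I * X K)
       = (\<Sum>I\<in>tuples p. \<Sum>K\<in>tuples p. (\<Prod>w<p. M (I!w) (K!w)) * \<Phi>2 I * X K)"
proof -
  have a: "a < p" "a \<noteq> b" using ab by auto
  have "(\<Sum>I\<in>tuples p. \<Sum>K\<in>tuples p. (\<Prod>w<p. M (I!w) (K!w)) * \<Phi>1 I * X K)
      = (\<Sum>I\<in>tuples p. \<Sum>K\<in>tuples p. (\<Prod>w<p. M (sw a b I ! w) (sw a b K ! w)) * \<Phi>1 (sw a b I) * X (sw a b K))"
  proof -
    have "(\<Sum>I\<in>tuples p. \<Sum>K\<in>tuples p. (\<Prod>w<p. M (I!w) (K!w)) * \<Phi>1 I * X K)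
       = (\<Sum>I\<in>tuples p. \<Sum>K\<in>tuples p. (\<Prod>w<p. M (I!w) (sw a b K ! w)) * \<Phi>1 I * X (sw a b K))"
      by (rule sum.cong[OF refl], rule sum_sw[OF a(1) ab(2) a(2)])
    also have "\<dots> = (\<Sum>I\<in>tuples p. \<Sum>K\<in>tuples p. (\<Prod>w<p. M (sw a b I ! w) (sw a b K ! w)) * \<Phi>1 (sw a b I) * X (sw a b K))"
      by (rule sum_sw[OF a(1) ab(2) a(2)])
    finally show ?thesis .
  qed
  also have "\<dots> = (\<Sum>I\<in>tuples p. \<Sum>K\<in>tuples p. (\<Prod>w<p. M (I!w) (K!w)) * \<Phi>2 I * X K)"
  proof (intro sum.cong refl)
    fix I K :: "'n list" assume "I \<in> tuples p" "K \<in> tuples p"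
    then have l: "length I = p" "length K = p" by (auto simp: tuples_def)
    show "(\<Prod>w<p. M (sw a b I ! w) (sw a b K ! w)) * \<Phi>1 (sw a b I) * X (sw a b K) = (\<Prod>w<p. M (I!w) (K!w)) * \<Phi>2 I * X K"
      using prod_sw[OF a(1) ab(2) a(2) l, of M] \<Phi>[OF l(1)] X[OF l(2)] by simp
  qed
  finally show ?thesis .
qed

lemma upd_swA:
  assumes "0 < s" "s < r" "r < length I"
  shows "(sw 0 s I)[s := \<alpha>, r := \<beta>] = sw 0 s (I[0 := \<alpha>, r := \<beta>])"
    "sw 0 s I ! s = I ! 0" "sw 0 s I ! r = I ! r"
proof -
  have l: "0 < length I" "s < length I" using assms by auto
  show "(sw 0 s I)[s := \<alpha>, r := \<beta>] = sw 0 s (I[0 := \<alpha>, r := \<beta>])"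
    unfolding list_eq_iff_nth_eq using assms l by (auto simp: sw_def nth_list_update)
  show "sw 0 s I ! s = I ! 0" "sw 0 s I ! r = I ! r"
    using assms l by (auto simp: sw_def nth_list_update)
qed

lemma upd_swB:
  assumes "1 < r" "r < length I"
  shows "(sw 1 r I)[0 := \<alpha>, r := \<beta>] = sw 1 r (I[0 := \<alpha>, 1 := \<beta>])"
    "sw 1 r I ! 0 = I ! 0" "sw 1 r I ! r = I ! 1"
proof -
  have l: "0 < length I" "1 < length I" using assms by auto
  show "(sw 1 r I)[0 := \<alpha>, r := \<beta>] = sw 1 r (I[0 := \<alpha>, 1 := \<beta>])"
    unfolding list_eq_iff_nth_eq using assms l by (auto simp: sw_def nth_list_update)
  show "sw 1 r I ! 0 = I ! 0" "sw 1 r I ! r = I ! 1"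
    using assms l by (auto simp: sw_def nth_list_update)
qed




lemma sum_tuples_cons:
  "(\<Sum>L\<in>tuples (Suc q). f L) = (\<Sum>i\<in>(UNIV::'n::finite set). \<Sum>J\<in>tuples q. (f (i # J) :: real))"
proof -
  have "(\<Sum>L\<in>tuples (Suc q). f L) = (\<Sum>(i,J)\<in>(UNIV::'n set) \<times> tuples q. f (i # J))"
  proof -
    have bl: "\<And>L::'n list. length L = Suc q \<Longrightarrow> hd L # tl L = L"
      by (metis hd_Cons_tl list.size(3) nat.distinct(1))
    show ?thesis
      by (rule sum.reindex_bij_witness[where i="\<lambda>(i,J). i # J" and j="\<lambda>L. (hd L, tl L)"])
         (auto simp: tuples_def bl)
  qed
  also have "\<dots> = (\<Sum>i\<in>(UNIV::'n set). \<Sum>J\<in>tuples q. f (i # J))"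
    by (simp add: sum.cartesian_product)
  finally show ?thesis .
qed

lemma T01_curv:
  fixes M :: "'n::finite \<Rightarrow> 'n \<Rightarrow> real" and X :: "'n list \<Rightarrow> real" and Rm :: "'n \<Rightarrow> 'n \<Rightarrow> 'n \<Rightarrow> 'n \<Rightarrow> real"
  shows "(\<Sum>I\<in>tuples (Suc (Suc q)). \<Sum>K\<in>tuples (Suc (Suc q)). (\<Prod>w<Suc (Suc q). M (I!w) (K!w)) *
            (\<Sum>a\<in>UNIV. \<Sum>b\<in>UNIV. X (I[0 := a, 1 := b]) * Rm a b (I!0) (I!1)) * X K)
   = (\<Sum>i\<in>UNIV. \<Sum>j\<in>UNIV. \<Sum>k\<in>UNIV. \<Sum>l\<in>UNIV. \<Sum>k2\<in>UNIV. \<Sum>l2\<in>UNIV.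
      \<Sum>J\<in>tuples q. \<Sum>K\<in>tuples q.
        X ([i, j] @ J) * Rm i j k l * M k k2 * M l l2 * (\<Prod>s<q. M (J ! s) (K ! s)) * X ([k2, l2] @ K))"
proof -
  let ?P = "\<lambda>J K. \<Prod>s<q. M (J ! s) (K ! s)"
  have "(\<Sum>I\<in>tuples (Suc (Suc q)). \<Sum>K\<in>tuples (Suc (Suc q)). (\<Prod>w<Suc (Suc q). M (I!w) (K!w)) *
            (\<Sum>a\<in>UNIV. \<Sum>b\<in>UNIV. X (I[0 := a, 1 := b]) * Rm a b (I!0) (I!1)) * X K)
     = (\<Sum>i\<in>UNIV. \<Sum>j\<in>UNIV. \<Sum>J\<in>tuples q. \<Sum>k\<in>UNIV. \<Sum>l\<in>UNIV. \<Sum>K\<in>tuples q. \<Sum>a\<in>UNIV. \<Sum>b\<in>UNIV.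
          X (a # b # J) * Rm a b i j * M i k * M j l * ?P J K * X (k # l # K))"
    unfolding sum_tuples_cons
    by (simp del: prod.lessThan_Suc add: prod.lessThan_Suc_shift sum_distrib_left sum_distrib_right ac_simps)
  also have "\<dots> = (\<Sum>(i,j,J,k,l,K,a,b)\<in>UNIV \<times> UNIV \<times> tuples q \<times> UNIV \<times> UNIV \<times> tuples q \<times> UNIV \<times> UNIV.
          X (a # b # J) * Rm a b i j * M i k * M j l * ?P J K * X (k # l # K))"
    by (simp only: sum.cartesian_product)
  also have "\<dots> = (\<Sum>(a,b,i,j,k,l,J,K)\<in>UNIV \<times> UNIV \<times> UNIV \<times> UNIV \<times> UNIV \<times> UNIV \<times> tuples q \<times> tuples q.
          X (a # b # J) * Rm a b i j * M i k * M j l * ?P J K * X (k # l # K))"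
    by (rule sum.reindex_bij_witness[where i="\<lambda>(a,b,i,j,k,l,J,K). (i,j,J,k,l,K,a,b)" and j="\<lambda>(i,j,J,k,l,K,a,b). (a,b,i,j,k,l,J,K)"])
       auto
  also have "\<dots> = (\<Sum>i\<in>UNIV. \<Sum>j\<in>UNIV. \<Sum>k\<in>UNIV. \<Sum>l\<in>UNIV. \<Sum>k2\<in>UNIV. \<Sum>l2\<in>UNIV.
      \<Sum>J\<in>tuples q. \<Sum>K\<in>tuples q.
        X (i # j # J) * Rm i j k l * M k k2 * M l l2 * ?P J K * X (k2 # l2 # K))"
    by (simp only: sum.cartesian_product)
  finally show ?thesis by simp
qed




definition Tsum :: "('n::finite \<Rightarrow> 'n \<Rightarrow> real) \<Rightarrow> ('n list \<Rightarrow> real) \<Rightarrow> ('n \<Rightarrow> 'n \<Rightarrow> 'n \<Rightarrow> 'n \<Rightarrow> real) \<Rightarrow> nat \<Rightarrow> nat \<Rightarrow> nat \<Rightarrow> real" where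
  "Tsum M X Rm p s r = (\<Sum>I\<in>tuples p. \<Sum>K\<in>tuples p. (\<Prod>w<p. M (I!w) (K!w)) *
      (\<Sum>a\<in>UNIV. \<Sum>b\<in>UNIV. X (I[s := a, r := b]) * Rm a b (I!s) (I!r)) * X K)"

lemma T_all:
  fixes M :: "'n::finite \<Rightarrow> 'n \<Rightarrow> real" and X :: "'n list \<Rightarrow> real"
  assumes anti: "\<And>J a b. length J = p \<Longrightarrow> a < b \<Longrightarrow> b < p \<Longrightarrow> X (sw a b J) = - X J"
    and sr: "s < r" "r < p"
  shows "Tsum M X Rm p s r = Tsum M X Rm p 0 1"
proof -
  have step1: "Tsum M X Rm p s r = Tsum M X Rm p 0 r" if s0: "0 < s"
    unfolding Tsum_def
  proof (rule T_swap[of 0 s p])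
    show "0 < s" "s < p" using s0 sr by auto
    show "X (sw 0 s K) = - X K" if "length K = p" for K
      using anti[OF that, of 0 s] s0 sr by simp
    fix I :: "'n list" assume l: "length I = p"
    have "(\<Sum>a\<in>UNIV. \<Sum>b\<in>UNIV. X ((sw 0 s I)[s := a, r := b]) * Rm a b (sw 0 s I ! s) (sw 0 s I ! r))
        = (\<Sum>a\<in>UNIV. \<Sum>b\<in>UNIV. - (X (I[0 := a, r := b]) * Rm a b (I ! 0) (I ! r)))"
      using upd_swA[OF s0 sr(1), of I] l sr anti[of _ 0 s] s0 by simp
    then show "(\<Sum>a\<in>UNIV. \<Sum>b\<in>UNIV. X ((sw 0 s I)[s := a, r := b]) * Rm a b (sw 0 s I ! s) (sw 0 s I ! r))
        = - (\<Sum>a\<in>UNIV. \<Sum>b\<in>UNIV. X (I[0 := a, r := b]) * Rm a b (I ! 0) (I ! r))"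
      by (simp add: sum_negf)
  qed
  have step2: "Tsum M X Rm p 0 r = Tsum M X Rm p 0 1" if r1: "1 < r"
    unfolding Tsum_def
  proof (rule T_swap[of 1 r p])
    show "1 < r" "r < p" using r1 sr by auto
    show "X (sw 1 r K) = - X K" if "length K = p" for K
      using anti[OF that, of 1 r] r1 sr by simp
    fix I :: "'n list" assume l: "length I = p"
    have "(\<Sum>a\<in>UNIV. \<Sum>b\<in>UNIV. X ((sw 1 r I)[0 := a, r := b]) * Rm a b (sw 1 r I ! 0) (sw 1 r I ! r))
        = (\<Sum>a\<in>UNIV. \<Sum>b\<in>UNIV. - (X (I[0 := a, 1 := b]) * Rm a b (I ! 0) (I ! 1)))"
      using upd_swB[OF r1, of I] l sr anti[of _ 1 r] r1 by simp
    then show "(\<Sum>a\<in>UNIV. \<Sum>b\<in>UNIV. X ((sw 1 r I)[0 := a, r := b]) * Rm a b (sw 1 r I ! 0) (sw 1 r I ! r))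
        = - (\<Sum>a\<in>UNIV. \<Sum>b\<in>UNIV. X (I[0 := a, 1 := b]) * Rm a b (I ! 0) (I ! 1))"
      by (simp add: sum_negf)
  qed
  show ?thesis
  proof (cases "s = 0")
    case True
    then show ?thesis using sr step2 by (cases "r = 1") auto
  next
    case False
    then have "Tsum M X Rm p s r = Tsum M X Rm p 0 r" using step1 by simp
    also have "\<dots> = Tsum M X Rm p 0 1" using sr False step2 by (cases "r = 1") auto
    finally show ?thesis .
  qed
qed

lemma count_real: "(\<Sum>s<p. real (p - Suc s)) = real p * (real p - 1) / 2"
proof (induction p)
  case 0
  then show ?case by simp
next
  case (Suc p)
  have "(\<Sum>s<Suc p. real (Suc p - Suc s)) = (\<Sum>s<p. real (Suc p - Suc s))"
    by simp
  also have "\<dots> = (\<Sum>s<p. real (p - Suc s) + 1)"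
    by (rule sum.cong) (auto simp: Suc_diff_Suc of_nat_Suc[symmetric] simp del: of_nat_Suc)
  also have "\<dots> = (\<Sum>s<p. real (p - Suc s)) + (\<Sum>s<p. (1::real))"
    by (rule sum.distrib)
  also have "\<dots> = real p * (real p - 1) / 2 + real p"
    by (simp only: Suc.IH) simp
  finally show ?case by (simp add: field_simps)
qed

lemma count_pairs: "(\<Sum>s<p. \<Sum>r\<in>{s<..<p}. (c::real)) = c * (real p * (real p - 1) / 2)"
  by (simp add: count_real[symmetric] sum_distrib_left mult.commute)

lemma tinner_CT:
  fixes M :: "'n::finite \<Rightarrow> 'n \<Rightarrow> real" and X :: "'n list \<Rightarrow> real"
  shows "(\<Sum>I\<in>tuples p. \<Sum>K\<in>tuples p. (\<Prod>w<p. M (I!w) (K!w)) *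
      (\<Sum>s<p. \<Sum>r\<in>{s<..<p}. \<Sum>a\<in>UNIV. \<Sum>b\<in>UNIV. X (I[s := a, r := b]) * Rm a b (I!s) (I!r)) * X K)
    = (\<Sum>s<p. \<Sum>r\<in>{s<..<p}. Tsum M X Rm p s r)"
proof -
  let ?F = "\<lambda>I K s r. (\<Prod>w<p. M (I!w) (K!w)) * (\<Sum>a\<in>UNIV. \<Sum>b\<in>UNIV. X (I[s := a, r := b]) * Rm a b (I!s) (I!r)) * X K"
  have "(\<Sum>I\<in>tuples p. \<Sum>K\<in>tuples p. (\<Prod>w<p. M (I!w) (K!w)) *
      (\<Sum>s<p. \<Sum>r\<in>{s<..<p}. \<Sum>a\<in>UNIV. \<Sum>b\<in>UNIV. X (I[s := a, r := b]) * Rm a b (I!s) (I!r)) * X K)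
      = (\<Sum>I\<in>tuples p. \<Sum>K\<in>tuples p. \<Sum>s<p. \<Sum>r\<in>{s<..<p}. ?F I K s r)"
    by (simp add: sum_distrib_left sum_distrib_right)
  also have "\<dots> = (\<Sum>s<p. \<Sum>I\<in>tuples p. \<Sum>K\<in>tuples p. \<Sum>r\<in>{s<..<p}. ?F I K s r)"
    by (rule swap3)
  also have "\<dots> = (\<Sum>s<p. \<Sum>r\<in>{s<..<p}. \<Sum>I\<in>tuples p. \<Sum>K\<in>tuples p. ?F I K s r)"
    by (intro sum.cong refl swap3)
  finally show ?thesis unfolding Tsum_def .
qed




lemma tinner_diff3:
  "tinner G x q (\<lambda>I. A I - B I - C I) D = tinner G x q A D - tinner G x q B D - tinner G x q C D"
  unfolding tinner_def by (simp add: algebra_simps sum_subtractf sum.distrib)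

lemma final_alg:
  fixes G :: "real^'n::finite \<Rightarrow> real^'n^'n" and X :: "real^'n \<Rightarrow> 'n list \<Rightarrow> real"
  assumes Msym: "\<And>a b. ginv G x a b = ginv G x b a"
    and anti: "\<And>J a b. length J = p \<Longrightarrow> a < b \<Longrightarrow> b < p \<Longrightarrow> X x (sw a b J) = - X x J"
  shows "(\<Sum>I\<in>tuples p. \<Sum>K\<in>tuples p.
      (\<Sum>u<p. (- (\<Sum>c\<in>UNIV. \<Sum>d\<in>UNIV. ginv G x (I!u) c * (- 2 * Ric G x c d) * ginv G x d (K!u)))
             * (\<Prod>w\<in>{..<p}-{u}. ginv G x (I!w) (K!w))) * X x I * X x K
      + (\<Prod>w<p. ginv G x (I!w) (K!w)) * hodge_lap G X p x I * X x K
      + (\<Prod>w<p. ginv G x (I!w) (K!w)) * X x I * hodge_lap G X p x K)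
    = 2 * tinner G x p (\<lambda>I. \<Sum>j\<in>UNIV. \<Sum>k\<in>UNIV. ginv G x j k * cov G (cov G X) x (I @ [j, k])) (X x)
      - real p * (real p - 1) * curv_term G X p x"
proof -
  define M where "M = ginv G x"
  define dM where "dM = (\<lambda>a b. - (\<Sum>c\<in>UNIV. \<Sum>d\<in>UNIV. M a c * (- 2 * Ric G x c d) * M d b))"
  define Lp where "Lp = (\<lambda>I. \<Sum>j\<in>UNIV. \<Sum>k\<in>UNIV. ginv G x j k * cov G (cov G X) x (I @ [j, k]))"
  define RT where "RT = (\<lambda>I. \<Sum>s<p. \<Sum>a\<in>UNIV. X x (I[s := a]) * Ric_mixed G x a (I ! s))"
  define CT where "CT = (\<lambda>I. \<Sum>s<p. \<Sum>r\<in>{s<..<p}. \<Sum>a\<in>UNIV. \<Sum>b\<in>UNIV.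
          X x (I[s := a, r := b]) * Riem_uudd G x a b (I ! s) (I ! r))"
  define H where "H = hodge_lap G X p x"
  have H_eq: "H = (\<lambda>I. Lp I - RT I - CT I)"
    unfolding H_def Lp_def RT_def CT_def by (rule ext) (simp add: hodge_lap_def)
  define SdM where "SdM = (\<Sum>I\<in>tuples p. \<Sum>K\<in>tuples p.
      (\<Sum>u<p. dM (I!u) (K!u) * (\<Prod>w\<in>{..<p}-{u}. M (I!w) (K!w))) * X x I * X x K)"
  have L1: "(\<Sum>I\<in>tuples p. \<Sum>K\<in>tuples p.
      (\<Sum>u<p. dM (I!u) (K!u) * (\<Prod>w\<in>{..<p}-{u}. M (I!w) (K!w))) * X x I * X x K
      + (\<Prod>w<p. M (I!w) (K!w)) * H I * X x K
      + (\<Prod>w<p. M (I!w) (K!w)) * X x I * H K)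
     = SdM + tinner G x p H (X x) + tinner G x p (X x) H"
    unfolding SdM_def tinner_def M_def by (simp add: sum.distrib)
  have L2: "tinner G x p (X x) H = tinner G x p H (X x)"
    by (rule tinner_comm) (rule Msym)
  have Msym': "\<And>a b. M a b = M b a" unfolding M_def by (rule Msym)
  have dM_eq: "dM a b = 2 * (\<Sum>c\<in>UNIV. M b c * Ric_mixed G x a c)" for a b
  proof -
    have "dM a b = 2 * (\<Sum>c\<in>UNIV. \<Sum>d\<in>UNIV. M a c * Ric G x c d * M d b)"
      unfolding dM_def by (simp add: sum_distrib_left sum_negf[symmetric] algebra_simps)
    also have "\<dots> = 2 * (\<Sum>d\<in>UNIV. \<Sum>c\<in>UNIV. M a c * Ric G x c d * M d b)"
      by (subst sum.swap) (rule refl)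
    also have "\<dots> = 2 * (\<Sum>c\<in>UNIV. M b c * Ric_mixed G x a c)"
      unfolding Ric_mixed_def M_def
      by (simp add: sum_distrib_left ac_simps Msym[of b])
    finally show ?thesis .
  qed
  have RTpart: "SdM = 2 * tinner G x p RT (X x)"
  proof -
    have "tinner G x p RT (X x) = (\<Sum>I\<in>tuples p. \<Sum>K\<in>tuples p. \<Sum>s<p.
        (\<Prod>w<p. M (I!w) (K!w)) * (\<Sum>a\<in>UNIV. Ric_mixed G x a (I ! s) * X x (I[s := a])) * X x K)"
      unfolding tinner_def RT_def M_def by (simp add: sum_distrib_left sum_distrib_right ac_simps)
    also have "\<dots> = (\<Sum>s<p. \<Sum>I\<in>tuples p. \<Sum>K\<in>tuples p.
        (\<Prod>w<p. M (I!w) (K!w)) * (\<Sum>a\<in>UNIV. Ric_mixed G x a (I ! s) * X x (I[s := a])) * X x K)"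
      by (rule swap3)
    also have "\<dots> = (\<Sum>s<p. \<Sum>I\<in>tuples p. \<Sum>K\<in>tuples p.
        (\<Sum>c\<in>UNIV. M (K!s) c * Ric_mixed G x (I!s) c) * (\<Prod>w\<in>{..<p}-{s}. M (I!w) (K!w)) * X x I * X x K)"
      by (intro sum.cong refl XA Msym') simp
    finally have 1: "tinner G x p RT (X x) = \<dots>" .
    have "SdM = (\<Sum>I\<in>tuples p. \<Sum>K\<in>tuples p. \<Sum>s<p.
        dM (I!s) (K!s) * (\<Prod>w\<in>{..<p}-{s}. M (I!w) (K!w)) * X x I * X x K)"
      unfolding SdM_def by (simp add: sum_distrib_right)
    also have "\<dots> = (\<Sum>s<p. \<Sum>I\<in>tuples p. \<Sum>K\<in>tuples p.
        dM (I!s) (K!s) * (\<Prod>w\<in>{..<p}-{s}. M (I!w) (K!w)) * X x I * X x K)"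
      by (rule swap3)
    also have "\<dots> = 2 * (\<Sum>s<p. \<Sum>I\<in>tuples p. \<Sum>K\<in>tuples p.
        (\<Sum>c\<in>UNIV. M (K!s) c * Ric_mixed G x (I!s) c) * (\<Prod>w\<in>{..<p}-{s}. M (I!w) (K!w)) * X x I * X x K)"
      unfolding dM_eq by (simp add: sum_distrib_left ac_simps)
    finally show ?thesis using 1 by simp
  qed
  have CTpart: "2 * tinner G x p CT (X x) = real p * (real p - 1) * curv_term G X p x"
  proof -
    have "tinner G x p CT (X x) = (\<Sum>s<p. \<Sum>r\<in>{s<..<p}. Tsum M (X x) (Riem_uudd G x) p s r)"
      unfolding tinner_def CT_def M_def by (rule tinner_CT)
    also have "\<dots> = (\<Sum>s<p. \<Sum>r\<in>{s<..<p}. Tsum M (X x) (Riem_uudd G x) p 0 1)"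
      by (intro sum.cong refl T_all anti) auto
    also have "\<dots> = Tsum M (X x) (Riem_uudd G x) p 0 1 * (real p * (real p - 1) / 2)"
      by (rule count_pairs)
    finally have 1: "tinner G x p CT (X x) = \<dots>" .
    show ?thesis
    proof (cases "p < 2")
      case True
      then have "p = 0 \<or> p = 1" by auto
      then show ?thesis using 1 by auto
    next
      case False
      then obtain q where q: "p = Suc (Suc q)" by (metis add_2_eq_Suc le_Suc_ex not_less)
      have "Tsum M (X x) (Riem_uudd G x) p 0 1 = curv_term G X p x"
        unfolding Tsum_def curv_term_def M_def q
        by (subst T01_curv) simp
      then show ?thesis using 1 by (simp add: algebra_simps)
    qed
  qed
  have "(\<Sum>I\<in>tuples p. \<Sum>K\<in>tuples p.
      (\<Sum>u<p. dM (I!u) (K!u) * (\<Prod>w\<in>{..<p}-{u}. M (I!w) (K!w))) * X x I * X x K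
      + (\<Prod>w<p. M (I!w) (K!w)) * H I * X x K
      + (\<Prod>w<p. M (I!w) (K!w)) * X x I * H K)
      = 2 * tinner G x p Lp (X x) - real p * (real p - 1) * curv_term G X p x"
    unfolding L1 L2 using RTpart CTpart unfolding H_eq tinner_diff3 by simp
  then show ?thesis unfolding M_def dM_def H_def Lp_def .
qed





theorem lemma1:
  fixes g :: "real \<Rightarrow> real^'n::finite \<Rightarrow> real^'n^'n"
    and \<xi> :: "real \<Rightarrow> real^'n \<Rightarrow> 'n list \<Rightarrow> real"
    and U :: "(real^'n) set" and W :: "(real \<times> (real^'n)) set"
    and T :: real and p :: nat
  assumes U_open: "open U"
    and W_open: "open W" and W_sub: "{0..<T} \<times> U \<subseteq> W"
    and g_smooth: "\<And>i j. Cinf_on W (\<lambda>z. g (fst z) (snd z) $ i $ j)"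
    and xi_smooth: "\<And>I. Cinf_on W (\<lambda>z. \<xi> (fst z) (snd z) I)"
    and g_sym: "\<And>t x i j. t \<in> {0..<T} \<Longrightarrow> x \<in> U \<Longrightarrow> g t x $ i $ j = g t x $ j $ i"
    and g_pos: "\<And>t x v. t \<in> {0..<T} \<Longrightarrow> x \<in> U \<Longrightarrow> v \<noteq> 0 \<Longrightarrow> v \<bullet> (g t x *v v) > 0"
    and ricci_flow: "\<And>t x i j. t \<in> {0..<T} \<Longrightarrow> x \<in> U \<Longrightarrow>
          ((\<lambda>s. g s x $ i $ j) has_real_derivative (- 2 * Ric (g t) x i j)) (at t within {0..<T})"
    and xi_antisym: "\<And>t x I s r. t \<in> {0..<T} \<Longrightarrow> x \<in> U \<Longrightarrow> length I = p \<Longrightarrow> s < r \<Longrightarrow> r < p \<Longrightarrow>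
          \<xi> t x (I[s := I ! r, r := I ! s]) = - \<xi> t x I"
    and heat: "\<And>t x I. t \<in> {0..<T} \<Longrightarrow> x \<in> U \<Longrightarrow> length I = p \<Longrightarrow>
          ((\<lambda>s. \<xi> s x I) has_real_derivative hodge_lap (g t) (\<xi> t) p x I) (at t within {0..<T})"
  shows "\<forall>t\<in>{0..<T}. \<forall>x\<in>U.
     ((\<lambda>s. normsq (g s) (\<xi> s) p x) has_real_derivative
        (lap (g t) (normsq (g t) (\<xi> t) p) x
         - 2 * tinner (g t) x (Suc p) (cov (g t) (\<xi> t) x) (cov (g t) (\<xi> t) x)
         - real p * (real p - 1) * curv_term (g t) (\<xi> t) p x))
      (at t within {0..<T})"
proof (intro ballI)
  fix t x assume t: "t \<in> {0..<T}" and x: "x \<in> U"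
  have W': "\<And>y. y \<in> U \<Longrightarrow> (t, y) \<in> W" using W_sub t by auto
  interpret ch: chart "g t" U
  proof
    show "open U" by (rule U_open)
    show "\<And>y i j. y \<in> U \<Longrightarrow> g t y $ i $ j = g t y $ j $ i" using g_sym t by blast
    show "\<And>y. y \<in> U \<Longrightarrow> det (g t y) \<noteq> 0" by (rule posdef_det) (rule g_pos[OF t])
    show "\<And>y i j k. y \<in> U \<Longrightarrow> (\<lambda>h. g t (y + h *\<^sub>R axis k 1) $ i $ j) differentiable (at 0)"
      by (rule Cinf_line1[where \<phi>="\<lambda>s y. g s y $ _ $ _", OF g_smooth W'])
    show "\<And>y i j k l. y \<in> U \<Longrightarrow> (\<lambda>h. pd k (\<lambda>z. g t z $ i $ j) (y + h *\<^sub>R axis l 1)) differentiable (at 0)"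
      by (rule Cinf_line2[where \<phi>="\<lambda>s y. g s y $ _ $ _", OF g_smooth W'])
  qed
  define S where "S = {0..<T}"
  have tS: "t \<in> S" using t by (simp add: S_def)
  have nz: "det (g t x) \<noteq> 0" by (rule ch.nzG[OF x])
  have ns: "normsq (g t) (\<xi> t) p = (\<lambda>y. tinner (g t) y p (\<xi> t y) (\<xi> t y))"
    by (rule ext) (simp add: normsq_def)
  have lapeq: "lap (g t) (normsq (g t) (\<xi> t) p) x =
     2 * tinner (g t) x p (\<lambda>I. \<Sum>j\<in>UNIV. \<Sum>k\<in>UNIV. ginv (g t) x j k * cov (g t) (cov (g t) (\<xi> t)) x (I @ [j, k])) (\<xi> t x)
     + 2 * tinner (g t) x (Suc p) (cov (g t) (\<xi> t) x) (cov (g t) (\<xi> t) x)"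
    unfolding ns
  proof (rule ch.lap_tinner[OF x])
    show "\<And>y I k. y \<in> U \<Longrightarrow> (\<lambda>h. \<xi> t (y + h *\<^sub>R axis k 1) I) differentiable (at 0)"
      by (rule Cinf_line1[where \<phi>="\<lambda>s y. \<xi> s y _", OF xi_smooth W'])
    show "\<And>y I k l. y \<in> U \<Longrightarrow> (\<lambda>h. pd k (\<lambda>z. \<xi> t z I) (y + h *\<^sub>R axis l 1)) differentiable (at 0)"
      by (rule Cinf_line2[where \<phi>="\<lambda>s y. \<xi> s y _", OF xi_smooth W'])
  qed
  define dM where "dM = (\<lambda>a b. - (\<Sum>c\<in>UNIV. \<Sum>d\<in>UNIV. ginv (g t) x a c * (- 2 * Ric (g t) x c d) * ginv (g t) x d b))"
  have dginv: "((\<lambda>s. ginv (g s) x a b) has_real_derivative dM a b) (at t within S)" for a b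
    unfolding ginv_def dM_def
    by (rule inv_deriv[where G="\<lambda>s. g s x"]) (use ricci_flow[OF t x] nz tS in \<open>auto simp: S_def\<close>)
  have dprod: "((\<lambda>s. \<Prod>u<p. ginv (g s) x (I!u) (K!u)) has_real_derivative
       (\<Sum>u<p. dM (I!u) (K!u) * (\<Prod>w\<in>{..<p}-{u}. ginv (g t) x (I!w) (K!w)))) (at t within S)" for I K
    by (rule DERIV_prod_within) (rule dginv)
  have dxi: "((\<lambda>s. \<xi> s x I) has_real_derivative hodge_lap (g t) (\<xi> t) p x I) (at t within S)" if "I \<in> tuples p" for I
    using heat[OF t x] that by (simp add: tuples_def S_def)
  have deriv: "((\<lambda>s. normsq (g s) (\<xi> s) p x) has_real_derivative
     (\<Sum>I\<in>tuples p. \<Sum>K\<in>tuples p.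
      (\<Sum>u<p. dM (I!u) (K!u) * (\<Prod>w\<in>{..<p}-{u}. ginv (g t) x (I!w) (K!w))) * \<xi> t x I * \<xi> t x K
      + (\<Prod>w<p. ginv (g t) x (I!w) (K!w)) * hodge_lap (g t) (\<xi> t) p x I * \<xi> t x K
      + (\<Prod>w<p. ginv (g t) x (I!w) (K!w)) * \<xi> t x I * hodge_lap (g t) (\<xi> t) p x K)) (at t within S)"
    unfolding normsq_def tinner_def
    apply (intro DERIV_sum)
    apply (rule DERIV_eqI[OF DERIV_mult[OF DERIV_mult[OF dprod dxi] dxi]])
      apply assumption+
    apply (simp add: algebra_simps)
    done
  have anti: "\<xi> t x (sw a b J) = - \<xi> t x J" if "length J = p" "a < b" "b < p" for J a b
    unfolding sw_def using xi_antisym[OF t x that] .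
  have fa: "(\<Sum>I\<in>tuples p. \<Sum>K\<in>tuples p.
      (\<Sum>u<p. dM (I!u) (K!u) * (\<Prod>w\<in>{..<p}-{u}. ginv (g t) x (I!w) (K!w))) * \<xi> t x I * \<xi> t x K
      + (\<Prod>w<p. ginv (g t) x (I!w) (K!w)) * hodge_lap (g t) (\<xi> t) p x I * \<xi> t x K
      + (\<Prod>w<p. ginv (g t) x (I!w) (K!w)) * \<xi> t x I * hodge_lap (g t) (\<xi> t) p x K)
    = 2 * tinner (g t) x p (\<lambda>I. \<Sum>j\<in>UNIV. \<Sum>k\<in>UNIV. ginv (g t) x j k * cov (g t) (cov (g t) (\<xi> t)) x (I @ [j, k])) (\<xi> t x)
      - real p * (real p - 1) * curv_term (g t) (\<xi> t) p x"
    unfolding dM_def by (rule final_alg[where G="g t" and X="\<xi> t" and x=x and p=p, OF ch.ginv_sym[OF x] anti])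
  show "((\<lambda>s. normsq (g s) (\<xi> s) p x) has_real_derivative
        (lap (g t) (normsq (g t) (\<xi> t) p) x
         - 2 * tinner (g t) x (Suc p) (cov (g t) (\<xi> t) x) (cov (g t) (\<xi> t) x)
         - real p * (real p - 1) * curv_term (g t) (\<xi> t) p x))
      (at t within {0..<T})"
    using deriv unfolding S_def fa lapeq by simp
qed


end
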